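(* Let $q\in(0,1)$, $c_{-1},c_{+1}\in\mathbb{R}$ and $\delta>0$. Let $S=\{-1,+1\}$ and let $(X_n,\eta_n)_{n\in\mathbb{Z}_+}$, where $\eta_n=X_n-X_{n-1}$, be a time-homogeneous irreducible Markov chain on $\mathbb{Z}_+\times S$ with transition probabilities \[\Pr[(X_{n+1},\eta_{n+1})=(x+j,j)\mid (X_n,\eta_n)=(x,i)]=q_{ij}(x),\quad i,j\in S,\] where, as $x\to\infty$, \[ q_{ij}(x)=\begin{cases} q+\frac{i c_i}{2x}+O(x^{-1-\delta}) & \text{if } j=i,\\ 1-q-\frac{i c_i}{2x}+O(x^{-1-\delta}) & \text{if } j\neq i.\end{cases}\] Let $c=(c_{+1}+c_{-1})/2$. If $c<-q$ then the walk is positive-recurrent; if $c>q$ then the walk is transient; if $|c|\le q$ then the walk is null-recurrent.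
   Context: This is a correlated random walk on $\mathbb{Z}_+$: the particle moves by $\pm1$ at each step, and the law of the next step depends on the current position $x$ and the previous direction of travel $i\in\{-1,+1\}$. *)

theory Defs
  imports "HOL-Analysis.Analysis" "HOL-Library.Landau_Symbols"
begin

text \<open>States are pairs (x, i) with x a nonnegative integer (position) and
 i in {-1,+1} (last direction of travel).\<close>

type_synonym cstate = "nat \<times> int"

definition dirs :: "int set" where "dirs = {-1, 1}"

definition crw_kernel :: "(int \<Rightarrow> int \<Rightarrow> nat \<Rightarrow> real) \<Rightarrow> cstate \<Rightarrow> cstate \<Rightarrow> real" where
  "crw_kernel qq s t =
     (if snd s \<in> dirs \<and> snd t \<in> dirs \<and> int (fst t) = int (fst s) + snd t
      then qq (snd s) (snd t) (fst s) else 0)"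

text \<open>State space of the chain: (0,+1) can never be entered (one arrives at 0
 only by a -1 step), so the chain lives on Z+ x S without (0,+1).\<close>
definition crw_states :: "cstate set" where
  "crw_states = {(x, i). i \<in> dirs \<and> (x > 0 \<or> i = -1)}"

fun nstep :: "(cstate \<Rightarrow> cstate \<Rightarrow> real) \<Rightarrow> nat \<Rightarrow> cstate \<Rightarrow> cstate \<Rightarrow> real" where
  "nstep P 0 s t = (if s = t then 1 else 0)"
| "nstep P (Suc n) s t = infsum (\<lambda>u. P s u * nstep P n u t) UNIV"

fun first_pass :: "(cstate \<Rightarrow> cstate \<Rightarrow> real) \<Rightarrow> nat \<Rightarrow> cstate \<Rightarrow> cstate \<Rightarrow> real" where
  "first_pass P 0 s t = 0"
| "first_pass P (Suc 0) s t = P s t"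
| "first_pass P (Suc (Suc n)) s t =
     infsum (\<lambda>u. if u = t then 0 else P s u * first_pass P (Suc n) u t) UNIV"

definition return_prob :: "(cstate \<Rightarrow> cstate \<Rightarrow> real) \<Rightarrow> cstate \<Rightarrow> real" where
  "return_prob P s = (\<Sum>n. first_pass P n s s)"

definition recurrent_state :: "(cstate \<Rightarrow> cstate \<Rightarrow> real) \<Rightarrow> cstate \<Rightarrow> bool" where
  "recurrent_state P s \<longleftrightarrow> return_prob P s = 1"

definition transient_state :: "(cstate \<Rightarrow> cstate \<Rightarrow> real) \<Rightarrow> cstate \<Rightarrow> bool" where
  "transient_state P s \<longleftrightarrow> \<not> recurrent_state P s"

definition pos_recurrent_state :: "(cstate \<Rightarrow> cstate \<Rightarrow> real) \<Rightarrow> cstate \<Rightarrow> bool" where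
  "pos_recurrent_state P s \<longleftrightarrow> recurrent_state P s \<and> summable (\<lambda>n. real n * first_pass P n s s)"

definition null_recurrent_state :: "(cstate \<Rightarrow> cstate \<Rightarrow> real) \<Rightarrow> cstate \<Rightarrow> bool" where
  "null_recurrent_state P s \<longleftrightarrow> recurrent_state P s \<and> \<not> summable (\<lambda>n. real n * first_pass P n s s)"

definition irreducible_on :: "(cstate \<Rightarrow> cstate \<Rightarrow> real) \<Rightarrow> cstate set \<Rightarrow> bool" where
  "irreducible_on P A \<longleftrightarrow> (\<forall>s\<in>A. \<forall>t\<in>A. \<exists>n. nstep P n s t > 0)"

end

theory Submission
  imports Defs
begin


locale crw =
  fixes q \<delta> :: real and c :: "int \<Rightarrow> real" and qq :: "int \<Rightarrow> int \<Rightarrow> nat \<Rightarrow> real"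
  assumes q01: "0 < q" "q < 1"
    and delta: "\<delta> > 0"
    and nonneg: "\<And>i j x. i \<in> dirs \<Longrightarrow> j \<in> dirs \<Longrightarrow> qq i j x \<ge> 0"
    and stoch: "\<And>i x. i \<in> dirs \<Longrightarrow> qq i 1 x + qq i (-1) x = 1"
    and boundary: "\<And>i. i \<in> dirs \<Longrightarrow> qq i (-1) 0 = 0"
    and irred: "irreducible_on (crw_kernel qq) crw_states"
    and asym_same: "\<And>i. i \<in> dirs \<Longrightarrow>
       (\<lambda>x::nat. qq i i x - (q + of_int i * c i / (2 * real x))) \<in> O(\<lambda>x. real x powr (-1 - \<delta>))"
begin

definition up :: "cstate \<Rightarrow> cstate" where "up s = (fst s + 1, 1)"
definition dn :: "cstate \<Rightarrow> cstate" where "dn s = (fst s - 1, -1)"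
definition pu :: "cstate \<Rightarrow> real" where "pu s = (if snd s \<in> dirs then qq (snd s) 1 (fst s) else 0)"
definition pd :: "cstate \<Rightarrow> real" where "pd s = (if snd s \<in> dirs then qq (snd s) (-1) (fst s) else 0)"

lemma up_ne_dn[simp]: "up s \<noteq> dn s" "dn s \<noteq> up s"
  by (auto simp: up_def dn_def)

lemma pu_nonneg: "pu s \<ge> 0" and pd_nonneg: "pd s \<ge> 0"
  by (auto simp: pu_def pd_def dirs_def intro: nonneg)

lemma pu_pd_sum: "snd s \<in> dirs \<Longrightarrow> pu s + pd s = 1"
  by (auto simp: pu_def pd_def stoch)

lemma pu_pd_le1: "pu s + pd s \<le> 1"
  by (cases "snd s \<in> dirs") (auto simp: pu_def pd_def stoch)

lemma kernel_repr:
  "crw_kernel qq s v = (if v = up s then pu s else 0) + (if v = dn s then pd s else 0)"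
proof -
  obtain x i where s: "s = (x,i)" by (cases s)
  obtain y j where v: "v = (y,j)" by (cases v)
  show ?thesis
  proof (cases "i \<in> dirs")
    case False
    then show ?thesis by (auto simp: s v crw_kernel_def pu_def pd_def up_def dn_def)
  next
    case True
    show ?thesis
    proof (cases "x = 0")
      case True
      with \<open>i \<in> dirs\<close> boundary show ?thesis
        by (auto simp: s v crw_kernel_def pu_def pd_def up_def dn_def dirs_def)
    next
      case False
      with \<open>i \<in> dirs\<close> show ?thesis
        by (auto simp: s v crw_kernel_def pu_def pd_def up_def dn_def dirs_def) 
    qed
  qed
qed

lemma sum_repr:
  "infsum (\<lambda>v. crw_kernel qq s v * f v) UNIV = pu s * f (up s) + pd s * f (dn s)"
proof -
  have "infsum (\<lambda>v. crw_kernel qq s v * f v) UNIV = infsum (\<lambda>v. crw_kernel qq s v * f v) {up s, dn s}"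
    by (rule infsum_cong_neutral) (auto simp: kernel_repr)
  also have "\<dots> = pu s * f (up s) + pd s * f (dn s)"
    by (simp add: kernel_repr)
  finally show ?thesis .
qed


definition qu :: "cstate \<Rightarrow> cstate \<Rightarrow> real" where "qu t s = (if up s = t then 0 else pu s)"
definition qd :: "cstate \<Rightarrow> cstate \<Rightarrow> real" where "qd t s = (if dn s = t then 0 else pd s)"
definition Q :: "cstate \<Rightarrow> (cstate \<Rightarrow> real) \<Rightarrow> cstate \<Rightarrow> real" where
  "Q t f s = qu t s * f (up s) + qd t s * f (dn s)"
definition Pt :: "cstate \<Rightarrow> cstate \<Rightarrow> real" where
  "Pt t s = (if up s = t then pu s else 0) + (if dn s = t then pd s else 0)"
definition Pf :: "(cstate \<Rightarrow> real) \<Rightarrow> cstate \<Rightarrow> real" where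
  "Pf f s = pu s * f (up s) + pd s * f (dn s)"

lemma qu_nonneg: "qu t s \<ge> 0" and qd_nonneg: "qd t s \<ge> 0"
  by (auto simp: qu_def qd_def pu_nonneg pd_nonneg)

lemma qu_le: "qu t s \<le> pu s" and qd_le: "qd t s \<le> pd s"
  by (auto simp: qu_def qd_def pu_nonneg pd_nonneg)

lemma Pt_Q1: "Pt t s + qu t s + qd t s = pu s + pd s"
  by (auto simp: Pt_def qu_def qd_def)

lemma Pt_nonneg: "Pt t s \<ge> 0"
  by (auto simp: Pt_def pu_nonneg pd_nonneg)

lemma Q_add: "Q t (\<lambda>u. f u + g u) s = Q t f s + Q t g s"
  by (simp add: Q_def algebra_simps)

lemma Q_diff: "Q t (\<lambda>u. f u - g u) s = Q t f s - Q t g s"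
  by (simp add: Q_def algebra_simps)

lemma Q_cmult: "Q t (\<lambda>u. a * f u) s = a * Q t f s"
  by (simp add: Q_def algebra_simps)

lemma Q_const: "Q t (\<lambda>u. a) s = a * (qu t s + qd t s)"
  by (simp add: Q_def algebra_simps)

lemma Q_sum: "Q t (\<lambda>u. \<Sum>j\<in>A. f j u) s = (\<Sum>j\<in>A. Q t (f j) s)"
  by (simp add: Q_def sum_distrib_left sum.distrib)

lemma Q_mono: "f (up s) \<le> g (up s) \<Longrightarrow> f (dn s) \<le> g (dn s) \<Longrightarrow> Q t f s \<le> Q t g s"
  unfolding Q_def by (intro add_mono mult_left_mono) (auto simp: qu_nonneg qd_nonneg)

lemma Pf_mono: "f (up s) \<le> g (up s) \<Longrightarrow> f (dn s) \<le> g (dn s) \<Longrightarrow> Pf f s \<le> Pf g s"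
  unfolding Pf_def by (intro add_mono mult_left_mono) (auto simp: pu_nonneg pd_nonneg)

lemma Q_le_Pf: "f (up s) \<ge> 0 \<Longrightarrow> f (dn s) \<ge> 0 \<Longrightarrow> Q t f s \<le> Pf f s"
  unfolding Q_def Pf_def by (intro add_mono mult_right_mono) (auto simp: qu_le qd_le)

abbreviation fp where "fp n s t \<equiv> first_pass (crw_kernel qq) n s t"

lemma fp_0[simp]: "fp 0 s t = 0" by simp

lemma kernel_t: "crw_kernel qq s t = Pt t s"
  unfolding kernel_repr Pt_def by auto

lemma fp_1: "fp (Suc 0) s t = Pt t s"
  unfolding first_pass.simps kernel_repr Pt_def by auto

lemma fp_SS: "fp (Suc (Suc n)) s t = Q t (\<lambda>u. fp (Suc n) u t) s"
proof -
  have "fp (Suc (Suc n)) s t = infsum (\<lambda>u. crw_kernel qq s u * (if u = t then 0 else fp (Suc n) u t)) UNIV"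
    by (simp add: if_distrib cong: if_cong)
  also have "\<dots> = Q t (\<lambda>u. fp (Suc n) u t) s"
    by (simp add: sum_repr Q_def qu_def qd_def)
  finally show ?thesis .
qed

declare first_pass.simps(3)[simp del]

lemma nstep_Suc: "nstep (crw_kernel qq) (Suc n) s v = Pf (\<lambda>u. nstep (crw_kernel qq) n u v) s"
  by (simp add: sum_repr Pf_def)

declare nstep.simps(2)[simp del]

lemma fp_nonneg: "fp n s t \<ge> 0"
proof (induction n arbitrary: s rule: nat_less_induct)
  case (1 n)
  show ?case
  proof (cases n)
    case 0 then show ?thesis by simp
  next
    case (Suc m)
    show ?thesis
    proof (cases m)
      case 0 then show ?thesis using Suc by (simp add: kernel_t Pt_nonneg)
    next
      case (Suc k)
      have "\<And>u. fp (Suc k) u t \<ge> 0" using 1[rule_format, of "Suc k"] Suc \<open>n = Suc m\<close> by simp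
      then show ?thesis using \<open>n = Suc m\<close> Suc
        by (simp add: fp_SS Q_def qu_nonneg qd_nonneg)
    qed
  qed
qed

definition H :: "cstate \<Rightarrow> nat \<Rightarrow> cstate \<Rightarrow> real" where
  "H t k s = (\<Sum>n<Suc k. fp n s t)"

lemma H_0[simp]: "H t 0 s = 0" by (simp add: H_def)

lemma H_Suc: "H t (Suc k) s = Pt t s + Q t (H t k) s"
proof (induction k arbitrary: s)
  case 0
  then show ?case by (simp add: H_def kernel_t Q_def)
next
  case (Suc k)
  have "H t (Suc (Suc k)) s = H t (Suc k) s + fp (Suc (Suc k)) s t"
    by (simp add: H_def)
  also have "\<dots> = Pt t s + Q t (H t k) s + Q t (\<lambda>u. fp (Suc k) u t) s"
    by (simp add: Suc fp_SS)
  also have "\<dots> = Pt t s + Q t (\<lambda>u. H t k u + fp (Suc k) u t) s"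
    by (simp add: Q_add)
  also have "(\<lambda>u. H t k u + fp (Suc k) u t) = H t (Suc k)"
    by (simp add: H_def fun_eq_iff)
  finally show ?case .
qed

lemma H_nonneg: "H t k s \<ge> 0"
  by (simp add: H_def sum_nonneg fp_nonneg)

lemma H_le1: "H t k s \<le> 1"
proof (induction k arbitrary: s)
  case 0 then show ?case by simp
next
  case (Suc k)
  have "H t (Suc k) s = Pt t s + Q t (H t k) s" by (rule H_Suc)
  also have "\<dots> \<le> Pt t s + Q t (\<lambda>u. 1) s"
    using Suc by (intro add_left_mono Q_mono) auto
  also have "\<dots> = pu s + pd s" using Pt_Q1[of t s] by (simp add: Q_const)
  also have "\<dots> \<le> 1" by (rule pu_pd_le1)
  finally show ?case .
qed

lemma H_mono: "k \<le> k' \<Longrightarrow> H t k s \<le> H t k' s"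
  unfolding H_def by (intro sum_mono2) (auto simp: fp_nonneg)

lemma fp_summable: "summable (\<lambda>n. fp n s t)"
proof (rule summableI_nonneg_bounded[where x=1])
  fix n show "fp n s t \<ge> 0" by (rule fp_nonneg)
next
  fix n show "(\<Sum>i<n. fp i s t) \<le> 1"
  proof (cases n)
    case 0 then show ?thesis by simp
  next
    case (Suc k) then show ?thesis using H_le1[of t k s] by (simp add: H_def)
  qed
qed

definition F :: "cstate \<Rightarrow> cstate \<Rightarrow> real" where "F t s = (\<Sum>n. fp n s t)"

lemma H_tendsto: "(\<lambda>k. H t k s) \<longlonglongrightarrow> F t s"
proof -
  have "(\<lambda>k. \<Sum>n<k. fp n s t) \<longlonglongrightarrow> F t s"
    unfolding F_def using fp_summable summable_LIMSEQ by blast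
  then have "(\<lambda>k. \<Sum>n<Suc k. fp n s t) \<longlonglongrightarrow> F t s"
    by (rule LIMSEQ_Suc)
  then show ?thesis by (simp add: H_def)
qed

lemma F_le1: "F t s \<le> 1"
  by (rule LIMSEQ_le_const2[OF H_tendsto]) (auto simp: H_le1)

lemma F_nonneg: "F t s \<ge> 0"
  by (rule LIMSEQ_le_const[OF H_tendsto]) (auto simp: H_nonneg)

lemma H_le_F: "H t k s \<le> F t s"
  by (rule LIMSEQ_le_const[OF H_tendsto]) (auto intro: H_mono)

lemma F_eq: "F t s = Pt t s + Q t (F t) s"
proof -
  have "(\<lambda>k. H t (Suc k) s) \<longlonglongrightarrow> F t s"
    using H_tendsto LIMSEQ_Suc by blast
  moreover have "(\<lambda>k. H t (Suc k) s) \<longlonglongrightarrow> Pt t s + Q t (F t) s"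
    unfolding H_Suc Q_def
    by (intro tendsto_intros H_tendsto)
  ultimately show ?thesis using LIMSEQ_unique by blast
qed

lemma return_prob_F: "return_prob (crw_kernel qq) s = F s s"
  by (simp add: return_prob_def F_def)

end


context crw begin

abbreviation SS where "SS \<equiv> crw_states"

lemma SS_dirs: "s \<in> SS \<Longrightarrow> snd s \<in> dirs"
  by (auto simp: crw_states_def)

lemma up_SS[simp]: "up s \<in> SS" and dn_SS[simp]: "dn s \<in> SS"
  by (auto simp: crw_states_def up_def dn_def dirs_def)

lemma fst_up[simp]: "fst (up s) = fst s + 1" and snd_up[simp]: "snd (up s) = 1"
  and fst_dn[simp]: "fst (dn s) = fst s - 1" and snd_dn[simp]: "snd (dn s) = -1"
  by (auto simp: up_def dn_def)

lemma up_ne_self[simp]: "up s \<noteq> s"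
  by (cases s) (auto simp: up_def)

lemma pd_zero_at0: "fst s = 0 \<Longrightarrow> pd s = 0"
  by (cases s) (auto simp: pd_def boundary)

lemma dn_ne_self: "pd s > 0 \<Longrightarrow> dn s \<noteq> s"
proof
  assume "pd s > 0" "dn s = s"
  then have "fst s - 1 = fst s" by (metis fst_dn)
  then have "fst s = 0" by simp
  then show False using pd_zero_at0 \<open>pd s > 0\<close> by simp
qed

lemma nstep_nonneg: "nstep (crw_kernel qq) n s v \<ge> 0"
proof (induction n arbitrary: s)
  case 0 then show ?case by simp
next
  case (Suc n) then show ?case
    by (simp add: nstep_Suc Pf_def pu_nonneg pd_nonneg)
qed

definition closed_set :: "cstate set \<Rightarrow> bool" where
  "closed_set Z \<longleftrightarrow> (\<forall>u\<in>Z. (pu u > 0 \<longrightarrow> up u \<in> Z) \<and> (pd u > 0 \<longrightarrow> dn u \<in> Z))"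

lemma closed_reach:
  assumes "closed_set Z" "nstep (crw_kernel qq) n u v > 0" "u \<in> Z"
  shows "v \<in> Z"
  using assms(2,3)
proof (induction n arbitrary: u)
  case 0 then show ?case by (simp split: if_splits)
next
  case (Suc n)
  have pos: "pu u * nstep (crw_kernel qq) n (up u) v + pd u * nstep (crw_kernel qq) n (dn u) v > 0"
    using Suc.prems by (simp add: nstep_Suc Pf_def)
  show ?case
  proof (cases "pu u * nstep (crw_kernel qq) n (up u) v > 0")
    case True
    then have "pu u > 0" "nstep (crw_kernel qq) n (up u) v > 0"
      using pu_nonneg[of u] nstep_nonneg[of n "up u" v]
      by (auto simp: zero_less_mult_iff)
    then show ?thesis using Suc.IH[of "up u"] assms(1) Suc.prems by (auto simp: closed_set_def)
  next
    case False
    then have "pd u * nstep (crw_kernel qq) n (dn u) v > 0" using pos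
      using pu_nonneg[of u] nstep_nonneg[of n "up u" v] by (smt (verit) mult_nonneg_nonneg)
    then have "pd u > 0" "nstep (crw_kernel qq) n (dn u) v > 0"
      using pd_nonneg[of u] nstep_nonneg[of n "dn u" v]
      by (auto simp: zero_less_mult_iff)
    then show ?thesis using Suc.IH[of "dn u"] assms(1) Suc.prems by (auto simp: closed_set_def)
  qed
qed

lemma irr: "u \<in> SS \<Longrightarrow> v \<in> SS \<Longrightarrow> \<exists>n. nstep (crw_kernel qq) n u v > 0"
  using irred by (auto simp: irreducible_on_def)

lemma closed_all:
  assumes "closed_set Z" "u \<in> Z" "u \<in> SS" "v \<in> SS"
  shows "v \<in> Z"
  using irr[OF assms(3,4)] closed_reach[OF assms(1) _ assms(2)] by blast

lemma qmm_pos: assumes "x \<ge> 1" shows "qq (-1) (-1) x > 0"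
proof (rule ccontr)
  assume "\<not> qq (-1) (-1) x > 0"
  then have z: "qq (-1) (-1) x = 0" using nonneg[of "-1" "-1" x] by (auto simp: dirs_def)
  let ?Z = "{u::cstate. fst u > x} \<union> {(x, -1)}"
  have "closed_set ?Z"
    unfolding closed_set_def
  proof
    fix u assume u: "u \<in> ?Z"
    show "(pu u > 0 \<longrightarrow> up u \<in> ?Z) \<and> (pd u > 0 \<longrightarrow> dn u \<in> ?Z)"
    proof (cases "u = (x,-1)")
      case True
      have "pd u = 0" using z True by (simp add: pd_def dirs_def)
      moreover have "up u \<in> ?Z" using True by simp
      ultimately show ?thesis by simp
    next
      case False
      then have fu: "fst u > x" using u by auto
      have "up u \<in> ?Z" using fu by simp
      moreover have "dn u \<in> ?Z"
      proof (cases "fst u - 1 > x")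
        case True then show ?thesis by simp
      next
        case False
        then have "fst u - 1 = x" using fu by linarith
        then have "dn u = (x, -1)" by (simp add: dn_def)
        then show ?thesis by simp
      qed
      ultimately show ?thesis by simp
    qed
  qed
  moreover have "(x+1, 1) \<in> ?Z" "(x+1, 1) \<in> SS" "(0, -1) \<in> SS"
    by (auto simp: crw_states_def dirs_def)
  ultimately have "(0, -1) \<in> ?Z" by (rule closed_all)
  then show False using assms by auto
qed

lemma qpp_pos: assumes "x \<ge> 1" shows "qq 1 1 x > 0"
proof (rule ccontr)
  assume "\<not> qq 1 1 x > 0"
  then have z: "qq 1 1 x = 0" using nonneg[of 1 1 x] by (auto simp: dirs_def)
  let ?Z = "{u::cstate. fst u < x} \<union> {(x, 1)}"
  have "closed_set ?Z"
    unfolding closed_set_def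
  proof
    fix u assume u: "u \<in> ?Z"
    show "(pu u > 0 \<longrightarrow> up u \<in> ?Z) \<and> (pd u > 0 \<longrightarrow> dn u \<in> ?Z)"
    proof (cases "u = (x,1)")
      case True
      have "pu u = 0" using z True by (simp add: pu_def dirs_def)
      moreover have "dn u \<in> ?Z" using True assms by simp
      ultimately show ?thesis by simp
    next
      case False
      then have fu: "fst u < x" using u by auto
      have "fst (dn u) < x" using fu by simp
      then have "dn u \<in> ?Z" by blast
      moreover have "up u \<in> ?Z"
      proof (cases "fst u + 1 < x")
        case True then show ?thesis by simp
      next
        case False
        then have "fst u + 1 = x" using fu by linarith
        then have "up u = (x, 1)" by (simp add: up_def)
        then show ?thesis by simp
      qed
      ultimately show ?thesis by simp
    qed
  qed
  moreover have "(0, -1) \<in> ?Z" "(0, -1) \<in> SS" "(x+1, 1) \<in> SS"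
    using assms by (auto simp: crw_states_def dirs_def)
  ultimately have "(x+1, 1) \<in> ?Z" by (rule closed_all)
  then show False by auto
qed

definition g :: "cstate \<Rightarrow> cstate \<Rightarrow> real" where "g t s = 1 - F t s"

lemma g_eq: "snd s \<in> dirs \<Longrightarrow> g t s = Q t (g t) s"
  using F_eq[of t s] Pt_Q1[of t s] pu_pd_sum[of s]
  by (simp add: Q_def g_def algebra_simps)

lemma g_nonneg: "g t s \<ge> 0" and g_le1: "g t s \<le> 1"
  using F_le1 F_nonneg by (auto simp: g_def)

definition gk :: "cstate \<Rightarrow> nat \<Rightarrow> cstate \<Rightarrow> real" where "gk t k s = 1 - H t k s"

lemma gk_Suc: "snd s \<in> dirs \<Longrightarrow> gk t (Suc k) s = Q t (gk t k) s"
  using H_Suc[of t k s] Pt_Q1[of t s] pu_pd_sum[of s]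
  by (simp add: Q_def gk_def algebra_simps)

lemma gk_nonneg: "gk t k s \<ge> 0"
  using H_le1 by (simp add: gk_def)

definition Sk :: "cstate \<Rightarrow> nat \<Rightarrow> cstate \<Rightarrow> real" where "Sk t k s = (\<Sum>j<k. gk t j s)"

lemma Sk_0[simp]: "Sk t 0 s = 0" by (simp add: Sk_def)

lemma Sk_Suc: "snd s \<in> dirs \<Longrightarrow> Sk t (Suc k) s = 1 + Q t (Sk t k) s"
proof -
  assume d: "snd s \<in> dirs"
  have "Sk t (Suc k) s = gk t 0 s + (\<Sum>j<k. gk t (Suc j) s)"
    unfolding Sk_def by (rule sum.lessThan_Suc_shift)
  also have "\<dots> = 1 + (\<Sum>j<k. Q t (gk t j) s)"
    using d by (simp add: gk_Suc gk_def[of t 0])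
  also have "\<dots> = 1 + Q t (Sk t k) s"
    unfolding Sk_def by (simp add: Q_sum)
  finally show ?thesis .
qed

lemma Sk_nonneg: "Sk t k s \<ge> 0"
  by (simp add: Sk_def sum_nonneg gk_nonneg)

lemma Sk_mono: "k \<le> k' \<Longrightarrow> Sk t k s \<le> Sk t k' s"
  unfolding Sk_def by (intro sum_mono2) (auto simp: gk_nonneg)

lemma F_one_all:
  assumes t: "t \<in> SS" and Ft: "F t t = 1" and v: "v \<in> SS"
  shows "F t v = 1"
proof -
  let ?Z = "{u. F t u = 1}"
  have "closed_set ?Z"
    unfolding closed_set_def
  proof
    fix u assume "u \<in> ?Z"
    then have Fu: "F t u = 1" by simp
    have e: "1 = Pt t u + qu t u * F t (up u) + qd t u * F t (dn u)"
      using F_eq[of t u] Fu by (simp add: Q_def)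
    have s: "Pt t u + qu t u + qd t u \<le> 1" using Pt_Q1[of t u] pu_pd_le1[of u] by simp
    have a: "qu t u * F t (up u) \<le> qu t u" "qd t u * F t (dn u) \<le> qd t u"
      by (rule mult_left_le[OF F_le1 qu_nonneg], rule mult_left_le[OF F_le1 qd_nonneg])
    have "pu u > 0 \<longrightarrow> up u \<in> ?Z"
    proof
      assume p: "pu u > 0"
      show "up u \<in> ?Z"
      proof (cases "up u = t")
        case True then show ?thesis using Ft by simp
      next
        case False
        then have qp: "qu t u = pu u" by (simp add: qu_def)
        have "qu t u * F t (up u) \<ge> qu t u" using e s a by linarith
        then have "F t (up u) \<ge> 1" using p qp by simp
        then show ?thesis using F_le1[of t "up u"] by simp
      qed
    qed
    moreover have "pd u > 0 \<longrightarrow> dn u \<in> ?Z"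
    proof
      assume p: "pd u > 0"
      show "dn u \<in> ?Z"
      proof (cases "dn u = t")
        case True then show ?thesis using Ft by simp
      next
        case False
        then have qp: "qd t u = pd u" by (simp add: qd_def)
        have "qd t u * F t (dn u) \<ge> qd t u" using e s a by linarith
        then have "F t (dn u) \<ge> 1" using p qp by simp
        then show ?thesis using F_le1[of t "dn u"] by simp
      qed
    qed
    ultimately show "(pu u > 0 \<longrightarrow> up u \<in> ?Z) \<and> (pd u > 0 \<longrightarrow> dn u \<in> ?Z)" by blast
  qed
  then show ?thesis using closed_all[of ?Z t v] t v Ft by simp
qed

lemma supersol:
  assumes h0: "\<And>s. h s \<ge> 0" and hs: "\<And>s. h s \<ge> Pt t s + Q t h s"
  shows "F t s \<le> h s"
proof -
  have "\<And>s. H t k s \<le> h s" for k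
  proof (induction k)
    case 0 then show ?case using h0 by simp
  next
    case (Suc k)
    have "H t (Suc k) s \<le> Pt t s + Q t h s" for s
      unfolding H_Suc using Suc by (intro add_left_mono Q_mono) auto
    then show ?case using hs order_trans by blast
  qed
  then show ?thesis by (intro LIMSEQ_le_const2[OF H_tendsto]) auto
qed

end


context crw begin

lemma avg_lemma:
  fixes p r a b m :: real
  assumes "p \<ge> 0" "r \<ge> 0" "p + r = 1" "a \<le> m" "b \<le> m" "m \<le> p * a + r * b"
  shows "(p > 0 \<longrightarrow> a = m) \<and> (r > 0 \<longrightarrow> b = m)"
proof -
  have m: "m = p * m + r * m" using assms(3) by (metis distrib_right mult_1)
  have rb: "r * b \<le> r * m" using assms by (intro mult_left_mono) auto
  have pa: "p * a \<le> p * m" using assms by (intro mult_left_mono) auto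
  have "p * m \<le> p * a" using m rb assms(6) by linarith
  moreover have "r * m \<le> r * b" using m pa assms(6) by linarith
  ultimately show ?thesis using assms by (auto simp: mult_le_cancel_left_pos)
qed

lemma Pf_diff: "Pf (\<lambda>u. f u - f2 u) s = Pf f s - Pf f2 s"
  by (simp add: Pf_def algebra_simps)
lemma Pf_cmult: "Pf (\<lambda>u. a * f u) s = a * Pf f s"
  by (simp add: Pf_def algebra_simps)

lemma g_le_Pf: "snd s \<in> dirs \<Longrightarrow> g t s \<le> Pf (g t) s"
  using g_eq[of s t] Q_le_Pf[of "g t" s t] g_nonneg by simp

lemma rec_step1:
  assumes t: "t \<in> A" and A: "finite A" "A \<subseteq> SS"
    and Psi0: "\<And>s. s \<in> SS \<Longrightarrow> \<Psi> s \<ge> 0"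
    and Psisup: "\<And>s. s \<in> SS \<Longrightarrow> s \<notin> A \<Longrightarrow> Pf \<Psi> s \<le> \<Psi> s"
    and Psifin: "\<And>K. finite {s\<in>SS. \<Psi> s \<le> K}"
    and eps: "\<epsilon> > 0" and u: "u \<in> SS"
  shows "g t u - \<epsilon> * \<Psi> u \<le> Max ((\<lambda>a. g t a - \<epsilon> * \<Psi> a) ` A)"
proof (rule ccontr)
  define h where "h s = g t s - \<epsilon> * \<Psi> s" for s
  define mA where "mA = Max (h ` A)"
  assume "\<not> ?thesis"
  then have hu: "h u > mA" by (simp add: h_def mA_def)
  define E where "E = {s\<in>SS. \<Psi> s \<le> \<Psi> u + 1/\<epsilon>}"
  have Efin: "finite E" unfolding E_def by (rule Psifin)
  have uE: "u \<in> E" using u eps by (simp add: E_def)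
  have "Max (h ` E) \<in> h ` E" using Efin uE by (intro Max_in) auto
  then obtain w where wE: "w \<in> E" and hw: "h w = Max (h ` E)" by auto
  have wmax: "h s \<le> h w" if "s \<in> SS" for s
  proof (cases "s \<in> E")
    case True then show ?thesis using hw Efin by simp
  next
    case False
    then have "\<Psi> s > \<Psi> u + 1/\<epsilon>" using that by (simp add: E_def)
    then have "\<epsilon> * \<Psi> s > \<epsilon> * (\<Psi> u + 1/\<epsilon>)" using eps by simp
    then have "\<epsilon> * \<Psi> s > \<epsilon> * \<Psi> u + 1" using eps by (simp add: algebra_simps)
    moreover have "h u \<le> h w" using hw Efin uE by simp
    ultimately show ?thesis using g_le1[of t s] g_nonneg[of t u] by (simp add: h_def)
  qed
  have hAw: "h a < h w" if "a \<in> A" for a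
  proof -
    have "h a \<le> mA" using A that by (simp add: mA_def)
    also have "\<dots> < h u" by (rule hu)
    also have "\<dots> \<le> h w" using wmax u by simp
    finally show ?thesis .
  qed
  let ?Z = "{s\<in>SS. h s = h w}"
  have cl: "closed_set ?Z"
    unfolding closed_set_def
  proof
    fix s assume sZ: "s \<in> ?Z"
    then have sS: "s \<in> SS" and hs: "h s = h w" by auto
    have sA: "s \<notin> A"
    proof
      assume "s \<in> A" then have "h s < h w" by (rule hAw)
      then show False using hs by simp
    qed
    have "h s \<le> Pf h s"
    proof -
      have "g t s \<le> Pf (g t) s" using g_le_Pf SS_dirs sS by blast
      moreover have "\<epsilon> * Pf \<Psi> s \<le> \<epsilon> * \<Psi> s" using Psisup[OF sS sA] eps by simp
      ultimately show ?thesis unfolding h_def Pf_diff Pf_cmult by linarith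
    qed
    then have "h w \<le> pu s * h (up s) + pd s * h (dn s)" using hs by (simp add: Pf_def)
    then have "(pu s > 0 \<longrightarrow> h (up s) = h w) \<and> (pd s > 0 \<longrightarrow> h (dn s) = h w)"
      using avg_lemma[of "pu s" "pd s" "h (up s)" "h w" "h (dn s)"] pu_nonneg pd_nonneg
        pu_pd_sum[OF SS_dirs[OF sS]] wmax[OF up_SS] wmax[OF dn_SS] by blast
    then show "(pu s > 0 \<longrightarrow> up s \<in> ?Z) \<and> (pd s > 0 \<longrightarrow> dn s \<in> ?Z)" by auto
  qed
  have "w \<in> SS" using wE by (simp add: E_def)
  then have "t \<in> ?Z" using closed_all[OF cl, of w t] A t by auto
  then show False using hAw[OF t] by simp
qed

lemma rec_crit:
  assumes t: "t \<in> A" and A: "finite A" "A \<subseteq> SS"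
    and Psi0: "\<And>s. s \<in> SS \<Longrightarrow> \<Psi> s \<ge> 0"
    and Psisup: "\<And>s. s \<in> SS \<Longrightarrow> s \<notin> A \<Longrightarrow> Pf \<Psi> s \<le> \<Psi> s"
    and Psifin: "\<And>K. finite {s\<in>SS. \<Psi> s \<le> K}"
  shows "F t t = 1"
proof -
  define M where "M = Max (g t ` A)"
  have Ane: "A \<noteq> {}" using t by auto
  have tS: "t \<in> SS" using t A by auto
  have gM: "g t u \<le> M" if u: "u \<in> SS" for u
  proof (rule field_le_epsilon)
    fix e :: real assume e: "e > 0"
    define \<epsilon> where "\<epsilon> = e / (\<Psi> u + 1)"
    have Pu: "\<Psi> u \<ge> 0" using Psi0 u by simp
    have eps: "\<epsilon> > 0" using e Pu by (simp add: \<epsilon>_def)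
    have "g t u - \<epsilon> * \<Psi> u \<le> Max ((\<lambda>a. g t a - \<epsilon> * \<Psi> a) ` A)"
      by (rule rec_step1[OF t A Psi0 Psisup Psifin eps u])
    also have "\<dots> \<le> M"
    proof -
      have "Max ((\<lambda>a. g t a - \<epsilon> * \<Psi> a) ` A) \<in> (\<lambda>a. g t a - \<epsilon> * \<Psi> a) ` A"
        using A Ane by (intro Max_in) auto
      then obtain a where "a \<in> A" "Max ((\<lambda>a. g t a - \<epsilon> * \<Psi> a) ` A) = g t a - \<epsilon> * \<Psi> a"
        by auto
      moreover have "g t a \<le> M" using \<open>a \<in> A\<close> A by (simp add: M_def)
      moreover have "\<epsilon> * \<Psi> a \<ge> 0" using Psi0[of a] \<open>a \<in> A\<close> A eps by auto
      ultimately show ?thesis by linarith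
    qed
    finally have "g t u \<le> M + \<epsilon> * \<Psi> u" by simp
    moreover have "\<epsilon> * \<Psi> u \<le> e"
    proof -
      have "\<epsilon> * \<Psi> u = e * (\<Psi> u / (\<Psi> u + 1))" by (simp add: \<epsilon>_def)
      also have "\<dots> \<le> e * 1" using e Pu by (intro mult_left_mono) auto
      finally show ?thesis by simp
    qed
    ultimately show "g t u \<le> M + e" by simp
  qed
  have "M \<in> g t ` A" unfolding M_def using A Ane by (intro Max_in) auto
  then obtain a where aA: "a \<in> A" and ga: "g t a = M" by auto
  have "M \<le> 0"
  proof (rule ccontr)
    assume "\<not> M \<le> 0"
    then have Mpos: "M > 0" by simp
    have nb: "(pu s > 0 \<longrightarrow> up s \<noteq> t \<and> g t (up s) = M) \<and> (pd s > 0 \<longrightarrow> dn s \<noteq> t \<and> g t (dn s) = M)"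
      if sS: "s \<in> SS" and gs: "g t s = M" for s
    proof -
      have sum1: "pu s + pd s = 1" using pu_pd_sum SS_dirs sS by blast
      have eq: "M = qu t s * g t (up s) + qd t s * g t (dn s)"
        using g_eq[of s t] SS_dirs[OF sS] gs by (simp add: Q_def)
      have gu: "g t (up s) \<le> M" and gd: "g t (dn s) \<le> M" using gM by auto
      have b1: "qu t s * g t (up s) \<le> qu t s * M" using gu qu_nonneg by (rule mult_left_mono)
      have b2: "qd t s * g t (dn s) \<le> qd t s * M" using gd qd_nonneg by (rule mult_left_mono)
      have ut: "up s \<noteq> t" if "pu s > 0"
      proof
        assume "up s = t"
        then have "qu t s = 0" by (simp add: qu_def)
        then have "M \<le> qd t s * M" using eq b2 by simp
        also have "\<dots> \<le> pd s * M" using qd_le Mpos by (intro mult_right_mono) auto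
        also have "\<dots> < 1 * M" using that sum1 Mpos by (intro mult_strict_right_mono) auto
        finally show False by simp
      qed
      have dt: "dn s \<noteq> t" if "pd s > 0"
      proof
        assume "dn s = t"
        then have "qd t s = 0" by (simp add: qd_def)
        then have "M \<le> qu t s * M" using eq b1 by simp
        also have "\<dots> \<le> pu s * M" using qu_le Mpos by (intro mult_right_mono) auto
        also have "\<dots> < 1 * M" using that sum1 Mpos by (intro mult_strict_right_mono) auto
        finally show False by simp
      qed
      have "(pu s > 0 \<longrightarrow> g t (up s) = M)"
      proof
        assume p: "pu s > 0"
        then have "qu t s = pu s" using ut by (simp add: qu_def)
        then have "M \<le> pu s * g t (up s) + pd s * M"
          using eq b2 qd_le[of t s] Mpos
          by (smt (verit, best) mult_right_mono)
        moreover have "M = pu s * M + pd s * M" using sum1 by (metis distrib_right mult_1)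
        ultimately have "pu s * M \<le> pu s * g t (up s)" by linarith
        then show "g t (up s) = M" using p gu by simp
      qed
      moreover have "(pd s > 0 \<longrightarrow> g t (dn s) = M)"
      proof
        assume p: "pd s > 0"
        then have "qd t s = pd s" using dt by (simp add: qd_def)
        then have "M \<le> pu s * M + pd s * g t (dn s)"
          using eq b1 qu_le[of t s] Mpos
          by (smt (verit, best) mult_right_mono)
        moreover have "M = pu s * M + pd s * M" using sum1 by (metis distrib_right mult_1)
        ultimately have "pd s * M \<le> pd s * g t (dn s)" by linarith
        then show "g t (dn s) = M" using p gd by simp
      qed
      ultimately show ?thesis using ut dt by blast
    qed
    let ?Z = "{s\<in>SS. g t s = M \<and> s \<noteq> t}"
    have cl: "closed_set ?Z"
      unfolding closed_set_def using nb by auto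
    obtain s0 where s0: "s0 \<in> ?Z"
    proof (cases "a = t")
      case False
      have "a \<in> {s\<in>SS. g t s = M \<and> s \<noteq> t}" using False aA A ga by auto
      then show ?thesis by (rule that)
    next
      case True
      have sum1: "pu t + pd t = 1" using pu_pd_sum SS_dirs tS by blast
      show ?thesis
      proof (cases "pu t > 0")
        case True
        then have "up t \<in> {s\<in>SS. g t s = M \<and> s \<noteq> t}" using nb[OF tS] ga \<open>a = t\<close> by auto
        then show ?thesis by (rule that)
      next
        case False
        then have "pd t > 0" using sum1 pu_nonneg[of t] by linarith
        then have "dn t \<in> {s\<in>SS. g t s = M \<and> s \<noteq> t}" using nb[OF tS] ga \<open>a = t\<close> by auto
        then show ?thesis by (rule that)
      qed
    qed
    then have "t \<in> ?Z" using closed_all[OF cl, of s0 t] tS by auto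
    then show False by simp
  qed
  then have "g t t \<le> 0" using gM[OF tS] by linarith
  then show ?thesis using F_le1[of t t] by (simp add: g_def)
qed

end


context crw begin

lemma Q_cong: "f (up s) = f' (up s) \<Longrightarrow> f (dn s) = f' (dn s) \<Longrightarrow> Q t f s = Q t f' s"
  by (simp add: Q_def)

lemma Sk_lower:
  assumes Ysub: "\<And>s. s \<in> SS \<Longrightarrow> Y s \<le> 1 + Q t Y s"
    and Ybd: "\<And>s. s \<in> SS \<Longrightarrow> Y s \<le> Bd"
  shows "s \<in> SS \<Longrightarrow> Sk t k s \<ge> Y s - Bd * gk t k s"
proof (induction k arbitrary: s)
  case 0 then show ?case using Ybd by (simp add: gk_def)
next
  case (Suc k)
  have d: "snd s \<in> dirs" using SS_dirs Suc.prems by blast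
  have "Y s - Bd * gk t (Suc k) s = Y s - Bd * Q t (gk t k) s" using gk_Suc[OF d] by simp
  also have "\<dots> \<le> 1 + Q t Y s - Bd * Q t (gk t k) s" using Ysub Suc.prems by simp
  also have "\<dots> = 1 + Q t (\<lambda>u. Y u - Bd * gk t k u) s" by (simp add: Q_diff Q_cmult)
  also have "\<dots> \<le> 1 + Q t (Sk t k) s"
    using Suc.IH[of "up s"] Suc.IH[of "dn s"] by (intro add_left_mono Q_mono) auto
  also have "\<dots> = Sk t (Suc k) s" using Sk_Suc[OF d] by simp
  finally show ?case .
qed

lemma nstep_Suc_pos:
  assumes "nstep (crw_kernel qq) (Suc n) u v > 0"
  shows "(pu u > 0 \<and> nstep (crw_kernel qq) n (up u) v > 0) \<or> (pd u > 0 \<and> nstep (crw_kernel qq) n (dn u) v > 0)"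
proof -
  have pos: "pu u * nstep (crw_kernel qq) n (up u) v + pd u * nstep (crw_kernel qq) n (dn u) v > 0"
    using assms by (simp add: nstep_Suc Pf_def)
  have a: "pu u * nstep (crw_kernel qq) n (up u) v \<ge> 0" "pd u * nstep (crw_kernel qq) n (dn u) v \<ge> 0"
    using pu_nonneg pd_nonneg nstep_nonneg by (auto intro: mult_nonneg_nonneg)
  show ?thesis
  proof (cases "pu u * nstep (crw_kernel qq) n (up u) v > 0")
    case True
    then show ?thesis using pu_nonneg[of u] nstep_nonneg[of n "up u" v]
      by (auto simp: zero_less_mult_iff)
  next
    case False
    then have "pd u * nstep (crw_kernel qq) n (dn u) v > 0" using pos a by linarith
    then show ?thesis using pd_nonneg[of u] nstep_nonneg[of n "dn u" v]
      by (auto simp: zero_less_mult_iff)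
  qed
qed

lemma Sk_step_lower:
  assumes "u \<in> SS" "w = up u \<and> pu u > 0 \<or> w = dn u \<and> pd u > 0" "w \<noteq> t"
  shows "\<exists>p>0. \<forall>k. Sk t (Suc k) u \<ge> p * Sk t k w"
proof -
  have d: "snd u \<in> dirs" using SS_dirs assms(1) by blast
  have e: "Sk t (Suc k) u = 1 + qu t u * Sk t k (up u) + qd t u * Sk t k (dn u)" for k
    using Sk_Suc[OF d] by (simp add: Q_def)
  have nn: "qu t u * Sk t k (up u) \<ge> 0" "qd t u * Sk t k (dn u) \<ge> 0" for k
    using qu_nonneg qd_nonneg Sk_nonneg by (auto intro: mult_nonneg_nonneg)
  from assms(2) show ?thesis
  proof
    assume w: "w = up u \<and> pu u > 0"
    then have "qu t u = pu u" using assms(3) by (simp add: qu_def)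
    then show ?thesis using w e nn by (intro exI[of _ "pu u"]) (smt (verit))
  next
    assume w: "w = dn u \<and> pd u > 0"
    then have "qd t u = pd u" using assms(3) by (simp add: qd_def)
    then show ?thesis using w e nn by (intro exI[of _ "pd u"]) (smt (verit))
  qed
qed

lemma Sk_path:
  assumes "nstep (crw_kernel qq) n u v > 0" "u \<in> SS"
  shows "(\<exists>m p. p > 0 \<and> (\<forall>k. Sk t (k + m) u \<ge> p * Sk t k v)) \<or>
         (\<exists>m p. p > 0 \<and> (\<forall>k. Sk t (k + m) t \<ge> p * Sk t k v))"
  using assms
proof (induction n arbitrary: u)
  case 0
  then have "u = v" by (simp split: if_splits)
  then show ?case by (intro disjI1 exI[of _ 0] exI[of _ 1]) simp
next
  case (Suc n)
  obtain w where w: "w = up u \<and> pu u > 0 \<or> w = dn u \<and> pd u > 0"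
    and nw: "nstep (crw_kernel qq) n w v > 0"
    using nstep_Suc_pos[OF Suc.prems(1)] by blast
  have wS: "w \<in> SS" using w by auto
  from Suc.IH[OF nw wS] show ?case
  proof
    assume "\<exists>m p. p > 0 \<and> (\<forall>k. Sk t (k + m) w \<ge> p * Sk t k v)"
    then obtain m p where p: "p > 0" and hp: "\<And>k. Sk t (k + m) w \<ge> p * Sk t k v" by blast
    show ?case
    proof (cases "w = t")
      case True then show ?thesis using p hp by blast
    next
      case False
      obtain p' where p': "p' > 0" and hp': "\<And>k. Sk t (Suc k) u \<ge> p' * Sk t k w"
        using Sk_step_lower[OF Suc.prems(2) w False] by blast
      have "Sk t (k + Suc m) u \<ge> (p' * p) * Sk t k v" for k
      proof -
        have "(p' * p) * Sk t k v = p' * (p * Sk t k v)" by simp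
        also have "\<dots> \<le> p' * Sk t (k + m) w" using hp p' by (intro mult_left_mono) auto
        also have "\<dots> \<le> Sk t (Suc (k + m)) u" by (rule hp')
        finally show ?thesis by simp
      qed
      then show ?thesis using p p' by (intro disjI1 exI[of _ "Suc m"] exI[of _ "p' * p"]) auto
    qed
  next
    assume "\<exists>m p. p > 0 \<and> (\<forall>k. Sk t (k + m) t \<ge> p * Sk t k v)"
    then show ?case by blast
  qed
qed

lemma Sk_transfer:
  assumes t: "t \<in> SS" and v: "v \<in> SS"
  shows "\<exists>m p. p > 0 \<and> (\<forall>k. Sk t (k + m) t \<ge> p * Sk t k v)"
proof -
  obtain n where "nstep (crw_kernel qq) n t v > 0" using irr[OF t v] by blast
  from Sk_path[OF this t] show ?thesis by blast
qed

definition Tk :: "cstate \<Rightarrow> nat \<Rightarrow> real" where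
  "Tk t k = (\<Sum>n<Suc k. real n * fp n t t)"

lemma Sk_Tk: "Sk t k t = real k * (1 - H t k t) + Tk t k"
proof (induction k)
  case 0 then show ?case by (simp add: Tk_def)
next
  case (Suc k)
  have "Sk t (Suc k) t = Sk t k t + (1 - H t k t)" by (simp add: Sk_def gk_def)
  moreover have "H t (Suc k) t = H t k t + fp (Suc k) t t" by (simp add: H_def)
  moreover have "Tk t (Suc k) = Tk t k + real (Suc k) * fp (Suc k) t t" by (simp add: Tk_def)
  ultimately show ?case using Suc by (simp add: algebra_simps)
qed

lemma summable_from_Sk:
  assumes "\<And>k. Sk t k t \<le> K"
  shows "summable (\<lambda>n. real n * fp n t t)"
proof (rule summableI_nonneg_bounded[where x = K])
  fix n show "real n * fp n t t \<ge> 0" using fp_nonneg by simp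
next
  fix n
  show "(\<Sum>i<n. real i * fp i t t) \<le> K"
  proof -
    have "(\<Sum>i<n. real i * fp i t t) \<le> Tk t n"
      unfolding Tk_def using fp_nonneg by (intro sum_mono2) auto
    also have "\<dots> \<le> Sk t n t" using Sk_Tk[of t n] H_le1[of t n t] by simp
    also have "\<dots> \<le> K" by (rule assms)
    finally show ?thesis .
  qed
qed

lemma Sk_bounded_from_summable:
  assumes sm: "summable (\<lambda>n. real n * fp n t t)" and F1: "F t t = 1"
  shows "Sk t k t \<le> 2 * (\<Sum>n. real n * fp n t t)"
proof -
  let ?f = "\<lambda>n. fp n t t" and ?g = "\<lambda>n. real n * fp n t t"
  have g0: "?g n \<ge> 0" for n using fp_nonneg by simp
  have smf: "summable ?f" by (rule fp_summable)
  have "1 - H t k t = (\<Sum>n. ?f (n + Suc k))"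
  proof -
    have "F t t = (\<Sum>n. ?f (n + Suc k)) + (\<Sum>i<Suc k. ?f i)"
      unfolding F_def using suminf_split_initial_segment[OF smf, of "Suc k"] by simp
    then show ?thesis using F1 by (simp add: H_def)
  qed
  then have "real k * (1 - H t k t) = (\<Sum>n. real k * ?f (n + Suc k))"
    using summable_ignore_initial_segment[OF smf, of "Suc k"] by (simp add: suminf_mult)
  also have "\<dots> \<le> (\<Sum>n. ?g (n + Suc k))"
    using summable_ignore_initial_segment[OF smf, of "Suc k"] summable_ignore_initial_segment[OF sm, of "Suc k"]
    by (intro suminf_le) (auto intro!: mult_right_mono simp: fp_nonneg summable_mult)
  also have "\<dots> \<le> (\<Sum>n. ?g n)"
  proof -
    have "(\<Sum>n. ?g n) = (\<Sum>n. ?g (n + Suc k)) + (\<Sum>i<Suc k. ?g i)"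
      using suminf_split_initial_segment[OF sm, of "Suc k"] by simp
    moreover have "(\<Sum>i<Suc k. ?g i) \<ge> 0" using g0 by (intro sum_nonneg) auto
    ultimately show ?thesis by linarith
  qed
  finally have a: "real k * (1 - H t k t) \<le> (\<Sum>n. ?g n)" .
  have b: "Tk t k \<le> (\<Sum>n. ?g n)"
    unfolding Tk_def using sm g0 by (intro sum_le_suminf) auto
  show ?thesis using a b Sk_Tk[of t k] by simp
qed

end


context crw begin

fun Qit :: "cstate \<Rightarrow> nat \<Rightarrow> (cstate \<Rightarrow> real) \<Rightarrow> cstate \<Rightarrow> real" where
  "Qit t 0 f = f"
| "Qit t (Suc j) f = Q t (Qit t j f)"

lemma Qit_one: "snd s \<in> dirs \<Longrightarrow> Qit t j (\<lambda>_. 1) s = gk t j s"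
proof (induction j arbitrary: s)
  case 0 then show ?case by (simp add: gk_def)
next
  case (Suc j)
  have "Qit t (Suc j) (\<lambda>_. 1) s = Q t (gk t j) s"
    by (simp, rule Q_cong) (auto simp: Suc.IH dirs_def)
  then show ?case using gk_Suc[OF Suc.prems] by simp
qed

lemma Qit_const: "Qit t j (\<lambda>u. C * f u) s = C * Qit t j f s"
proof (induction j arbitrary: s)
  case 0 then show ?case by simp
next
  case (Suc j)
  have "Qit t (Suc j) (\<lambda>u. C * f u) s = Q t (\<lambda>u. C * Qit t j f u) s"
    by (simp, rule Q_cong) (auto simp: Suc.IH)
  then show ?case by (simp add: Q_cmult)
qed

lemma Qit_local:
  assumes "\<And>v. v \<in> SS \<Longrightarrow> fst v \<le> X + j \<Longrightarrow> f v \<le> C"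
    and "s \<in> SS" "fst s \<le> X"
  shows "Qit t j f s \<le> C * Qit t j (\<lambda>_. 1) s"
  using assms
proof (induction j arbitrary: X s)
  case 0 then show ?case by simp
next
  case (Suc j)
  have a: "Qit t j f (up s) \<le> C * Qit t j (\<lambda>_. 1) (up s)"
    using Suc.IH[of "X + 1" "up s"] Suc.prems by auto
  have b: "Qit t j f (dn s) \<le> C * Qit t j (\<lambda>_. 1) (dn s)"
    using Suc.IH[of "X + 1" "dn s"] Suc.prems by auto
  have "Qit t (Suc j) f s \<le> Q t (\<lambda>u. C * Qit t j (\<lambda>_. 1) u) s"
    using a b by (simp, intro Q_mono) auto
  then show ?case by (simp add: Q_cmult)
qed

lemma Sk_shift:
  assumes "s \<in> SS"
  shows "Sk t (k + j) s \<le> real j + Qit t j (Sk t k) s"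
  using assms
proof (induction j arbitrary: s)
  case 0 then show ?case by simp
next
  case (Suc j)
  have d: "snd s \<in> dirs" using SS_dirs Suc.prems by blast
  have "Sk t (k + Suc j) s = 1 + Q t (Sk t (k + j)) s" using Sk_Suc[OF d] by simp
  also have "\<dots> \<le> 1 + Q t (\<lambda>u. real j + Qit t j (Sk t k) u) s"
    using Suc.IH[of "up s"] Suc.IH[of "dn s"] by (intro add_left_mono Q_mono) auto
  also have "\<dots> = 1 + real j * (qu t s + qd t s) + Q t (Qit t j (Sk t k)) s"
    by (simp add: Q_add Q_const)
  also have "\<dots> \<le> 1 + real j + Q t (Qit t j (Sk t k)) s"
  proof -
    have "qu t s + qd t s \<le> 1" using Pt_Q1[of t s] pu_pd_le1[of s] Pt_nonneg[of t s] by linarith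
    then have "real j * (qu t s + qd t s) \<le> real j * 1" by (intro mult_left_mono) auto
    then show ?thesis by simp
  qed
  finally show ?case by simp
qed

lemma fp_pos_aux:
  assumes "nstep (crw_kernel qq) n u v > 0"
  shows "u = v \<or> (\<exists>m. fp m u v > 0)"
  using assms
proof (induction n arbitrary: u)
  case 0 then show ?case by (simp split: if_splits)
next
  case (Suc n)
  obtain w where w: "w = up u \<and> pu u > 0 \<or> w = dn u \<and> pd u > 0"
    and nw: "nstep (crw_kernel qq) n w v > 0"
    using nstep_Suc_pos[OF Suc.prems] by blast
  have Ppos: "Pt v u > 0" if "w = v"
    using w that Pt_def pu_nonneg pd_nonneg by (auto simp: Pt_def)
  have "\<exists>m. fp m u v > 0"
  proof (cases "w = v")
    case True then show ?thesis using Ppos fp_1 by (intro exI[of _ 1]) simp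
  next
    case False
    then obtain m where m: "fp m w v > 0" using Suc.IH[OF nw] by blast
    then obtain m' where m': "m = Suc m'" by (cases m) auto
    have "fp (Suc m) u v = qu v u * fp m (up u) v + qd v u * fp m (dn u) v"
      using m' by (simp add: fp_SS Q_def)
    moreover have "qu v u * fp m (up u) v \<ge> 0" "qd v u * fp m (dn u) v \<ge> 0"
      using qu_nonneg qd_nonneg fp_nonneg by (auto intro: mult_nonneg_nonneg)
    moreover have "qu v u * fp m (up u) v > 0 \<or> qd v u * fp m (dn u) v > 0"
      using w False m by (auto simp: qu_def qd_def)
    ultimately show ?thesis by (intro exI[of _ "Suc m"]) linarith
  qed
  then show ?case by blast
qed

lemma H_pos_exists:
  assumes s: "s \<in> SS" and t: "t \<in> SS"
  shows "\<exists>n. H t n s > 0"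
proof -
  have "\<exists>n. nstep (crw_kernel qq) (Suc n) s t > 0"
  proof (cases "s = t")
    case False
    obtain n where n: "nstep (crw_kernel qq) n s t > 0" using irr[OF s t] by blast
    have "n \<noteq> 0"
    proof
      assume "n = 0" then show False using n False by (simp split: if_splits)
    qed
    then show ?thesis using n by (cases n) auto
  next
    case True
    have sum1: "pu s + pd s = 1" using pu_pd_sum SS_dirs s by blast
    have "\<exists>w. w = up s \<and> pu s > 0 \<or> w = dn s \<and> pd s > 0"
    proof (cases "pu s > 0")
      case True then show ?thesis by blast
    next
      case False then have "pd s > 0" using sum1 pu_nonneg[of s] by linarith
      then show ?thesis by blast
    qed
    then obtain w where w: "w = up s \<and> pu s > 0 \<or> w = dn s \<and> pd s > 0" by blast
    obtain n where n: "nstep (crw_kernel qq) n w t > 0" using irr[of w t] w t by auto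
    have "nstep (crw_kernel qq) (Suc n) s t = pu s * nstep (crw_kernel qq) n (up s) t + pd s * nstep (crw_kernel qq) n (dn s) t"
      by (simp add: nstep_Suc Pf_def)
    moreover have "pu s * nstep (crw_kernel qq) n (up s) t \<ge> 0" "pd s * nstep (crw_kernel qq) n (dn s) t \<ge> 0"
      using pu_nonneg pd_nonneg nstep_nonneg by (auto intro: mult_nonneg_nonneg)
    moreover have "pu s * nstep (crw_kernel qq) n (up s) t > 0 \<or> pd s * nstep (crw_kernel qq) n (dn s) t > 0"
      using w n by auto
    ultimately show ?thesis by (intro exI[of _ n]) linarith
  qed
  then obtain n where n: "nstep (crw_kernel qq) (Suc n) s t > 0" by blast
  obtain m where m: "fp m s t > 0"
  proof -
    obtain w where w: "w = up s \<and> pu s > 0 \<or> w = dn s \<and> pd s > 0"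
      and nw: "nstep (crw_kernel qq) n w t > 0"
      using nstep_Suc_pos[OF n] by blast
    have "\<exists>m. fp m s t > 0"
    proof (cases "w = t")
      case True
      then have "Pt t s > 0" using w pu_nonneg pd_nonneg by (auto simp: Pt_def)
      then show ?thesis using fp_1 by (intro exI[of _ 1]) simp
    next
      case False
      then obtain m where m: "fp m w t > 0" using fp_pos_aux[OF nw] by blast
      then obtain m' where m': "m = Suc m'" by (cases m) auto
      have "fp (Suc m) s t = qu t s * fp m (up s) t + qd t s * fp m (dn s) t"
        using m' by (simp add: fp_SS Q_def)
      moreover have "qu t s * fp m (up s) t \<ge> 0" "qd t s * fp m (dn s) t \<ge> 0"
        using qu_nonneg qd_nonneg fp_nonneg by (auto intro: mult_nonneg_nonneg)
      moreover have "qu t s * fp m (up s) t > 0 \<or> qd t s * fp m (dn s) t > 0"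
        using w False m by (auto simp: qu_def qd_def)
      ultimately show ?thesis by (intro exI[of _ "Suc m"]) linarith
    qed
    then show ?thesis using that by blast
  qed
  have "fp m s t \<le> H t m s"
    unfolding H_def using fp_nonneg by (intro member_le_sum) auto
  then show ?thesis using m by (intro exI[of _ m]) linarith
qed

lemma finite_levels: "finite {v\<in>SS. fst v \<le> X}"
proof -
  have "{v\<in>SS. fst v \<le> X} \<subseteq> {0..X} \<times> dirs" by (auto simp: crw_states_def)
  moreover have "finite ({0..X} \<times> dirs)" by (simp add: dirs_def)
  ultimately show ?thesis by (rule finite_subset)
qed

lemma foster:
  assumes tB: "t \<in> B" and Bfin: "finite B" and BS: "B \<subseteq> SS"
    and Phi0: "\<And>s. s \<in> SS \<Longrightarrow> \<Phi> s \<ge> 0"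
    and Phid: "\<And>s. s \<in> SS \<Longrightarrow> s \<notin> B \<Longrightarrow> 1 + Pf \<Phi> s \<le> \<Phi> s"
  shows "\<exists>K. \<forall>k. Sk t k t \<le> K"
proof -
  have tS: "t \<in> SS" using tB BS by auto
  have Bne: "B \<noteq> {}" using tB by auto
  define M where "M k = Max (Sk t k ` B)" for k
  have SkM: "Sk t k s \<le> M k" if "s \<in> B" for k s
    unfolding M_def using Bfin that by (intro Max_ge) auto
  have Mle: "M k \<le> K" if "\<And>s. s \<in> B \<Longrightarrow> Sk t k s \<le> K" for k K
    unfolding M_def using Bfin Bne that by (subst Max_le_iff) auto
  have M0: "M k \<ge> 0" for k using SkM[OF tB, of k] Sk_nonneg[of t k t] by linarith
  have Mmono: "M k \<le> M k'" if "k \<le> k'" for k k'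
    using Mle SkM Sk_mono that order_trans by metis
  have claim1: "\<And>s. s \<in> SS \<Longrightarrow> s \<notin> B \<Longrightarrow> Sk t k s \<le> \<Phi> s + M k" for k
  proof (induction k)
    case 0 then show ?case using Phi0 M0 by (simp add: add_nonneg_nonneg)
  next
    case (Suc k)
    fix s assume sS: "s \<in> SS" and sB: "s \<notin> B"
    have d: "snd s \<in> dirs" using SS_dirs sS by blast
    have bnd: "Sk t k u \<le> \<Phi> u + M k" if "u \<in> SS" for u
    proof (cases "u \<in> B")
      case True then show ?thesis using SkM Phi0[OF that] by (smt (verit))
    next
      case False then show ?thesis using Suc.IH that by blast
    qed
    have "Sk t (Suc k) s = 1 + Q t (Sk t k) s" using Sk_Suc[OF d] by simp
    also have "\<dots> \<le> 1 + Pf (Sk t k) s" using Q_le_Pf Sk_nonneg by simp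
    also have "\<dots> \<le> 1 + Pf (\<lambda>u. \<Phi> u + M k) s" using bnd by (intro add_left_mono Pf_mono) auto
    also have "\<dots> = 1 + Pf \<Phi> s + M k * (pu s + pd s)" by (simp add: Pf_def algebra_simps)
    also have "\<dots> = 1 + Pf \<Phi> s + M k" using pu_pd_sum[OF d] by simp
    also have "\<dots> \<le> \<Phi> s + M k" using Phid[OF sS sB] by simp
    also have "\<dots> \<le> \<Phi> s + M (Suc k)" using Mmono[of k "Suc k"] by simp
    finally show "Sk t (Suc k) s \<le> \<Phi> s + M (Suc k)" .
  qed
  have "\<forall>s\<in>B. \<exists>n. H t n s > 0" using H_pos_exists BS tS by blast
  then obtain nf where nf: "\<And>s. s \<in> B \<Longrightarrow> H t (nf s) s > 0" by metis
  define L where "L = Max (nf ` B)"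
  have HL: "H t L s > 0" if "s \<in> B" for s
  proof -
    have "nf s \<le> L" unfolding L_def using Bfin that by (intro Max_ge) auto
    then show ?thesis using H_mono nf[OF that] by (meson less_le_trans)
  qed
  have L1: "L \<ge> 1"
  proof (rule ccontr)
    assume "\<not> L \<ge> 1" then have "L = 0" by simp
    then show False using HL[OF tB] by simp
  qed
  define \<epsilon> where "\<epsilon> = Min ((\<lambda>s. H t L s) ` B)"
  have eps: "\<epsilon> > 0"
  proof -
    have "\<epsilon> \<in> (\<lambda>s. H t L s) ` B" unfolding \<epsilon>_def using Bfin Bne by (intro Min_in) auto
    then show ?thesis using HL by auto
  qed
  have epsle: "\<epsilon> \<le> H t L s" if "s \<in> B" for s
    unfolding \<epsilon>_def using Bfin that by (intro Min_le) auto
  have eps1: "\<epsilon> \<le> 1" using epsle[OF tB] H_le1[of t L t] by linarith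
  define X where "X = Max (fst ` B)"
  have fstX: "fst s \<le> X" if "s \<in> B" for s unfolding X_def using Bfin that by (intro Max_ge) auto
  define R where "R = {v\<in>SS. fst v \<le> X + L}"
  have Rfin: "finite R" unfolding R_def by (rule finite_levels)
  define C where "C = (if R = {} then 0 else Max (\<Phi> ` R))"
  have PhiC: "\<Phi> v \<le> C" if "v \<in> R" for v
    unfolding C_def using Rfin that by (auto intro: Max_ge)
  have C0: "C \<ge> 0"
  proof -
    have "t \<in> R" using tS fstX[OF tB] by (simp add: R_def)
    then show ?thesis using PhiC Phi0 tS by (meson order_trans)
  qed
  have step: "M (k + L) \<le> real L + (C + M k) * (1 - \<epsilon>)" for k
  proof (rule Mle)
    fix s assume sB: "s \<in> B"
    have sS: "s \<in> SS" using sB BS by auto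
    have loc: "Qit t L (Sk t k) s \<le> (C + M k) * Qit t L (\<lambda>_. 1) s"
    proof (rule Qit_local[of X L])
      fix v assume vS: "v \<in> SS" and vX: "fst v \<le> X + L"
      show "Sk t k v \<le> C + M k"
      proof (cases "v \<in> B")
        case True then show ?thesis using SkM C0 by (smt (verit))
      next
        case False
        have "\<Phi> v \<le> C" using PhiC vS vX by (simp add: R_def)
        then show ?thesis using claim1[OF vS False, of k] by simp
      qed
    qed (use sS fstX[OF sB] in auto)
    have "Qit t L (\<lambda>_. 1) s = gk t L s" using Qit_one SS_dirs sS by blast
    also have "\<dots> \<le> 1 - \<epsilon>" using epsle[OF sB] by (simp add: gk_def)
    finally have g1: "Qit t L (\<lambda>_. 1) s \<le> 1 - \<epsilon>" .
    have "Sk t (k + L) s \<le> real L + Qit t L (Sk t k) s" by (rule Sk_shift[OF sS])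
    also have "\<dots> \<le> real L + (C + M k) * (1 - \<epsilon>)"
      using loc g1 C0 M0[of k] by (smt (verit) mult_left_mono)
    finally show "Sk t (k + L) s \<le> real L + (C + M k) * (1 - \<epsilon>)" .
  qed
  define K where "K = (real L + C) / \<epsilon>"
  have MjL: "M (j * L) \<le> K" for j
  proof (induction j)
    case 0
    have "M 0 \<le> 0" by (rule Mle) simp
    moreover have "K \<ge> 0" unfolding K_def using C0 eps by simp
    ultimately show ?case by simp
  next
    case (Suc j)
    have "M (Suc j * L) = M (j * L + L)" by (simp add: add.commute)
    also have "\<dots> \<le> real L + (C + M (j * L)) * (1 - \<epsilon>)" by (rule step)
    also have "\<dots> \<le> real L + (C + K) * (1 - \<epsilon>)"
      using Suc eps1 by (intro add_left_mono mult_right_mono) auto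
    also have "\<dots> = K - C * \<epsilon>"
    proof -
      have eK: "\<epsilon> * K = real L + C" unfolding K_def using eps by simp
      then show ?thesis by (simp add: algebra_simps)
    qed
    also have "\<dots> \<le> K" using C0 eps by simp
    finally show ?case .
  qed
  have "Sk t k t \<le> K" for k
  proof -
    have "k \<le> k * L" using L1 by simp
    then have "Sk t k t \<le> M (k * L)" using SkM[OF tB] Mmono order_trans by blast
    then show ?thesis using MjL[of k] by simp
  qed
  then show ?thesis by blast
qed

end


lemma sq_sum_le: "((x::real) + y)^2 \<le> 2 * (x^2 + y^2)"
proof -
  have "(x+y)^2 + (x-y)^2 = 2 * (x^2 + y^2)" by (simp add: power2_eq_square algebra_simps)
  moreover have "(x-y)^2 \<ge> 0" by simp
  ultimately show ?thesis by linarith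
qed

lemma ln_ratio_bound:
  fixes Y P q a cm e1 e2 K0 pp mm :: real
  assumes Y: "Y \<ge> 2" and q: "q > 0" and P0: "P \<ge> 0" and P1: "P \<le> 1" and PY: "1 / Y^2 \<le> P"
    and e1: "\<bar>e1\<bar> \<le> K0 * P" and e2: "\<bar>e2\<bar> \<le> K0 * P" and K0: "K0 \<ge> 0"
    and dpm: "pp - mm = a * q / Y + e1 - e2" and dmq: "mm - q = - cm / (2 * Y) + e2"
    and mm: "mm \<ge> q / 2" and z: "\<bar>pp / mm - 1\<bar> \<le> 1/2"
  shows "\<bar>ln (pp / mm) - a * (ln Y - ln (Y - 1))\<bar> \<le>
    (2 * (8 * a^2 + 32 * K0^2 / q^2) + (2/q) * (\<bar>a\<bar> * \<bar>cm\<bar> / 2 + \<bar>a\<bar> * K0 + 2 * K0) + 2 * \<bar>a\<bar>) * P"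
proof -
  define z where "z = pp / mm - 1"
  have mmpos: "mm > 0" using mm q by linarith
  have Ypos: "Y > 0" using Y by simp
  have zeq: "z = (pp - mm) / mm" using mmpos by (simp add: z_def field_simps)
  have t1: "\<bar>ln (pp / mm) - z\<bar> \<le> 2 * z^2"
  proof -
    have "pp / mm = 1 + z" by (simp add: z_def)
    then show ?thesis using abs_ln_one_plus_x_minus_x_bound[of z] z by (simp add: z_def)
  qed
  have t2: "\<bar>(ln Y - ln (Y - 1)) - 1 / Y\<bar> \<le> 2 / Y^2"
  proof -
    have "ln Y - ln (Y - 1) = - ln (1 + (- 1 / Y))"
    proof -
      have "1 + (- 1 / Y) = (Y - 1) / Y" using Ypos by (simp add: field_simps)
      then have "ln (1 + (- 1 / Y)) = ln (Y - 1) - ln Y" using Y by (simp add: ln_div)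
      then show ?thesis by simp
    qed
    moreover have "\<bar>ln (1 + (- 1 / Y)) - (- 1 / Y)\<bar> \<le> 2 * (- 1 / Y)^2"
      using Y by (intro abs_ln_one_plus_x_minus_x_bound) (simp add: field_simps)
    ultimately show ?thesis by (simp add: power2_eq_square field_simps abs_minus_commute)
  qed
  have PY1: "P / Y \<le> P"
  proof -
    have "P * 1 \<le> P * Y" using P0 Y by (intro mult_left_mono) auto
    then show ?thesis using Y by (simp add: divide_le_eq)
  qed
  have t3: "\<bar>z - a / Y\<bar> \<le> (2/q) * (\<bar>a\<bar> * \<bar>cm\<bar> / 2 + \<bar>a\<bar> * K0 + 2 * K0) * P"
  proof -
    have "z - a / Y = (a * (q - mm) / Y + e1 - e2) / mm"
      using mmpos Ypos dpm by (simp add: zeq field_simps)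
    moreover have "\<bar>a * (q - mm) / Y + e1 - e2\<bar> \<le> (\<bar>a\<bar> * \<bar>cm\<bar> / 2 + \<bar>a\<bar> * K0 + 2 * K0) * P"
    proof -
      have cY: "\<bar>cm / (2 * Y)\<bar> = \<bar>cm\<bar> / (2 * Y)" using Ypos by (simp add: abs_divide)
      have "\<bar>q - mm\<bar> \<le> \<bar>cm\<bar> / (2 * Y) + K0 * P" using dmq e2 cY
        by (simp only: abs_le_iff) linarith
      then have "\<bar>a * (q - mm) / Y\<bar> \<le> \<bar>a\<bar> * (\<bar>cm\<bar> / (2 * Y) + K0 * P) / Y"
        using Ypos by (simp add: abs_mult abs_divide divide_right_mono mult_left_mono)
      also have "\<dots> = \<bar>a\<bar> * \<bar>cm\<bar> / 2 * (1 / Y^2) + \<bar>a\<bar> * K0 * (P / Y)"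
        using Ypos by (simp add: field_simps power2_eq_square)
      also have "\<dots> \<le> \<bar>a\<bar> * \<bar>cm\<bar> / 2 * P + \<bar>a\<bar> * K0 * P"
        using PY PY1 K0 by (intro add_mono mult_left_mono) auto
      finally have wb: "\<bar>a * (q - mm) / Y\<bar> \<le> \<bar>a\<bar> * \<bar>cm\<bar> / 2 * P + \<bar>a\<bar> * K0 * P" .
      define w where "w = a * (q - mm) / Y"
      have "\<bar>w + e1 - e2\<bar> \<le> (\<bar>a\<bar> * \<bar>cm\<bar> / 2 + \<bar>a\<bar> * K0 + 2 * K0) * P"
        using wb[folded w_def] e1 e2 by (simp only: abs_le_iff distrib_right) linarith
      then show ?thesis by (simp add: w_def)
    qed
    ultimately have "\<bar>z - a / Y\<bar> \<le> (\<bar>a\<bar> * \<bar>cm\<bar> / 2 + \<bar>a\<bar> * K0 + 2 * K0) * P / mm"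
      using mmpos by (simp add: abs_divide divide_right_mono)
    also have "\<dots> \<le> (\<bar>a\<bar> * \<bar>cm\<bar> / 2 + \<bar>a\<bar> * K0 + 2 * K0) * P / (q / 2)"
      using mm q P0 K0 by (intro divide_left_mono mult_nonneg_nonneg) auto
    also have "\<dots> = (2/q) * (\<bar>a\<bar> * \<bar>cm\<bar> / 2 + \<bar>a\<bar> * K0 + 2 * K0) * P" by simp
    finally show ?thesis .
  qed
  have t4: "z^2 \<le> (8 * a^2 + 32 * K0^2 / q^2) * P"
  proof -
    have "\<bar>z\<bar> \<le> (\<bar>a\<bar> * q / Y + 2 * K0 * P) / mm"
    proof -
      have aq: "\<bar>a * q / Y\<bar> = \<bar>a\<bar> * q / Y" using q Ypos by (simp add: abs_mult abs_divide)
      define w where "w = a * q / Y"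
      have "\<bar>w + e1 - e2\<bar> \<le> \<bar>a\<bar> * q / Y + 2 * K0 * P"
        using aq[folded w_def] e1 e2 by (simp only: abs_le_iff) linarith
      then have "\<bar>pp - mm\<bar> \<le> \<bar>a\<bar> * q / Y + 2 * K0 * P" using dpm by (simp add: w_def)
      then show ?thesis using mmpos by (simp add: zeq abs_divide divide_right_mono)
    qed
    also have "\<dots> \<le> (\<bar>a\<bar> * q / Y + 2 * K0 * P) / (q / 2)"
      using mm q P0 K0 Ypos by (intro divide_left_mono add_nonneg_nonneg mult_nonneg_nonneg) auto
    also have "\<dots> = 2 * \<bar>a\<bar> / Y + 4 * K0 * P / q" using q by (simp add: field_simps)
    finally have az: "\<bar>z\<bar> \<le> 2 * \<bar>a\<bar> / Y + 4 * K0 * P / q" .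
    have "z^2 = \<bar>z\<bar>^2" by simp
    also have "\<dots> \<le> (2 * \<bar>a\<bar> / Y + 4 * K0 * P / q)^2"
      using az by (intro power_mono) auto
    also have "\<dots> \<le> 2 * ((2 * \<bar>a\<bar> / Y)^2 + (4 * K0 * P / q)^2)"
      by (rule sq_sum_le)
    also have "(2 * \<bar>a\<bar> / Y)^2 = 4 * a^2 * (1 / Y^2)" by (simp add: power2_eq_square field_simps)
    also have "(4 * K0 * P / q)^2 = 16 * K0^2 / q^2 * (P * P)" by (simp add: power2_eq_square field_simps)
    also have "2 * (4 * a^2 * (1 / Y^2) + 16 * K0^2 / q^2 * (P * P)) \<le> 2 * (4 * a^2 * P + 16 * K0^2 / q^2 * P)"
    proof -
      have "P * P \<le> P" using P0 P1 by (simp add: mult_left_le)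
      then show ?thesis using PY by (intro mult_left_mono add_mono mult_left_mono) auto
    qed
    also have "\<dots> = (8 * a^2 + 32 * K0^2 / q^2) * P" by (simp add: algebra_simps)
    finally show ?thesis .
  qed
  have "\<bar>ln (pp / mm) - a * (ln Y - ln (Y - 1))\<bar> \<le>
        \<bar>ln (pp / mm) - z\<bar> + \<bar>z - a / Y\<bar> + \<bar>a\<bar> * \<bar>(ln Y - ln (Y - 1)) - 1 / Y\<bar>"
  proof -
    have "ln (pp / mm) - a * (ln Y - ln (Y - 1)) = (ln (pp / mm) - z) + (z - a / Y) - a * ((ln Y - ln (Y - 1)) - 1 / Y)"
      by (simp add: algebra_simps)
    moreover have "\<bar>x + y - a * w\<bar> \<le> \<bar>x\<bar> + \<bar>y\<bar> + \<bar>a\<bar> * \<bar>w\<bar>" for x y w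
    proof -
      have "\<bar>x + y - a * w\<bar> \<le> \<bar>x + y\<bar> + \<bar>a * w\<bar>" by (rule abs_triangle_ineq4)
      also have "\<bar>x + y\<bar> \<le> \<bar>x\<bar> + \<bar>y\<bar>" by (rule abs_triangle_ineq)
      finally show ?thesis by (simp add: abs_mult)
    qed
    ultimately show ?thesis by metis
  qed
  also have "\<dots> \<le> 2 * ((8 * a^2 + 32 * K0^2 / q^2) * P) + (2/q) * (\<bar>a\<bar> * \<bar>cm\<bar> / 2 + \<bar>a\<bar> * K0 + 2 * K0) * P + \<bar>a\<bar> * (2 * P)"
  proof -
    have "\<bar>a\<bar> * \<bar>(ln Y - ln (Y - 1)) - 1 / Y\<bar> \<le> \<bar>a\<bar> * (2 * P)"
    proof -
      have "2 / Y^2 = 2 * (1 / Y^2)" by simp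
      then have "\<bar>(ln Y - ln (Y - 1)) - 1 / Y\<bar> \<le> 2 * P" using t2 PY by linarith
      then show ?thesis by (intro mult_left_mono) auto
    qed
    then show ?thesis using t1 t3 t4 by linarith
  qed
  also have "\<dots> = (2 * (8 * a^2 + 32 * K0^2 / q^2) + (2/q) * (\<bar>a\<bar> * \<bar>cm\<bar> / 2 + \<bar>a\<bar> * K0 + 2 * K0) + 2 * \<bar>a\<bar>) * P"
    by (simp add: algebra_simps)
  finally show ?thesis .
qed



context crw begin

definition aa :: real where "aa = (c 1 + c (-1)) / (2 * q)"
definition \<delta>' :: real where "\<delta>' = min \<delta> 1"

lemma dp_pos: "\<delta>' > 0" "\<delta>' \<le> 1" "\<delta>' \<le> \<delta>" using delta by (auto simp: \<delta>'_def)

lemma asym_bound: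
  assumes i: "i \<in> dirs"
  shows "\<exists>K\<ge>0. eventually (\<lambda>y. \<bar>qq i i y - (q + of_int i * c i / (2 * real y))\<bar> \<le> K * real y powr (-1-\<delta>)) sequentially"
proof -
  obtain K where K: "K > 0" and ev: "eventually (\<lambda>y. norm (qq i i y - (q + of_int i * c i / (2 * real y))) \<le> K * norm (real y powr (-1-\<delta>))) at_top"
    using asym_same[OF i] by (elim landau_o.bigE)
  have "eventually (\<lambda>y. \<bar>qq i i y - (q + of_int i * c i / (2 * real y))\<bar> \<le> K * real y powr (-1-\<delta>)) sequentially"
    using ev by eventually_elim simp
  then show ?thesis using K by (intro exI[of _ K]) auto
qed

lemma log_ratio_bound:
  "\<exists>K Y0. K \<ge> 0 \<and> Y0 \<ge> 2 \<and> (\<forall>y\<ge>Y0. \<bar>ln (qq 1 1 y / qq (-1) (-1) y) - aa * (ln (real y) - ln (real y - 1))\<bar> \<le> K * real y powr (-1-\<delta>'))"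
proof -
  obtain K1 where K1: "K1 \<ge> 0" and ev1: "eventually (\<lambda>y. \<bar>qq 1 1 y - (q + of_int 1 * c 1 / (2 * real y))\<bar> \<le> K1 * real y powr (-1-\<delta>)) sequentially"
    using asym_bound[of 1] by (auto simp: dirs_def)
  obtain K2 where K2: "K2 \<ge> 0" and ev2: "eventually (\<lambda>y. \<bar>qq (-1) (-1) y - (q + of_int (-1) * c (-1) / (2 * real y))\<bar> \<le> K2 * real y powr (-1-\<delta>)) sequentially"
    using asym_bound[of "-1"] by (auto simp: dirs_def)
  define K0 where "K0 = K1 + K2"
  have K0: "K0 \<ge> 0" using K1 K2 by (simp add: K0_def)
  define P where "P y = real y powr (-1-\<delta>')" for y :: nat
  define cm where "cm = c (-1)"
  have P_lim: "P \<longlonglongrightarrow> 0"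
    unfolding P_def using dp_pos
    by (intro tendsto_neg_powr filterlim_real_sequentially) auto
  have inv_lim: "(\<lambda>y. 1 / real y) \<longlonglongrightarrow> 0" by (rule lim_const_over_n)
  define W where "W y = 2 * \<bar>aa\<bar> * (1 / real y) + 4 * K0 / q * P y + K0 * P y + \<bar>cm\<bar> / 2 * (1 / real y)" for y
  have W_lim: "W \<longlonglongrightarrow> 0"
  proof -
    have "W \<longlonglongrightarrow> 2 * \<bar>aa\<bar> * 0 + 4 * K0 / q * 0 + K0 * 0 + \<bar>cm\<bar> / 2 * 0"
      unfolding W_def by (intro tendsto_intros P_lim inv_lim)
    then show ?thesis by simp
  qed
  have evW: "eventually (\<lambda>y. W y < min (1/2) (q/8)) sequentially"
    by (rule order_tendstoD(2)[OF W_lim]) (use q01 in simp)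
  have ev: "eventually (\<lambda>y. y \<ge> 2 \<and> W y < min (1/2) (q/8)
      \<and> \<bar>qq 1 1 y - (q + of_int 1 * c 1 / (2 * real y))\<bar> \<le> K1 * real y powr (-1-\<delta>)
      \<and> \<bar>qq (-1) (-1) y - (q + of_int (-1) * c (-1) / (2 * real y))\<bar> \<le> K2 * real y powr (-1-\<delta>)) sequentially"
    using evW ev1 ev2 eventually_ge_at_top[of "2::nat"] by eventually_elim auto
  then obtain N where N: "\<And>y. y \<ge> N \<Longrightarrow> y \<ge> 2 \<and> W y < min (1/2) (q/8)
      \<and> \<bar>qq 1 1 y - (q + of_int 1 * c 1 / (2 * real y))\<bar> \<le> K1 * real y powr (-1-\<delta>)
      \<and> \<bar>qq (-1) (-1) y - (q + of_int (-1) * c (-1) / (2 * real y))\<bar> \<le> K2 * real y powr (-1-\<delta>)"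
    unfolding eventually_sequentially by blast
  define Kf where "Kf = 2 * (8 * aa^2 + 32 * K0^2 / q^2) + (2/q) * (\<bar>aa\<bar> * \<bar>cm\<bar> / 2 + \<bar>aa\<bar> * K0 + 2 * K0) + 2 * \<bar>aa\<bar>"
  have Kf: "Kf \<ge> 0" unfolding Kf_def using K0 q01 by (intro add_nonneg_nonneg mult_nonneg_nonneg) auto
  have main: "\<bar>ln (qq 1 1 y / qq (-1) (-1) y) - aa * (ln (real y) - ln (real y - 1))\<bar> \<le> Kf * real y powr (-1-\<delta>')"
    if y: "y \<ge> max N 2" for y
  proof -
    from N[of y] y have y2: "y \<ge> 2" and Wy: "W y < min (1/2) (q/8)"
      and b1: "\<bar>qq 1 1 y - (q + c 1 / (2 * real y))\<bar> \<le> K1 * real y powr (-1-\<delta>)"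
      and b2: "\<bar>qq (-1) (-1) y - (q - cm / (2 * real y))\<bar> \<le> K2 * real y powr (-1-\<delta>)"
      by (auto simp: cm_def)
    define Y where "Y = real y"
    have Y2: "Y \<ge> 2" using y2 by (simp add: Y_def)
    have Ypos: "Y > 0" using Y2 by simp
    have pw: "real y powr (-1-\<delta>) \<le> P y"
      unfolding P_def using y2 dp_pos by (intro powr_mono) auto
    have P0: "P y \<ge> 0" by (simp add: P_def)
    have P1: "P y \<le> 1"
    proof -
      have "real y powr (-1-\<delta>') \<le> real y powr 0" using y2 dp_pos by (intro powr_mono) auto
      then show ?thesis using y2 by (simp add: P_def)
    qed
    have PY: "1 / Y^2 \<le> P y"
    proof -
      have "real y powr (-2) \<le> real y powr (-1-\<delta>')" using y2 dp_pos by (intro powr_mono) auto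
      moreover have "real y powr (-2) = 1 / Y^2" using y2 by (simp add: Y_def powr_minus powr_realpow divide_inverse)
      ultimately show ?thesis by (simp add: P_def)
    qed
    define e1 where "e1 = qq 1 1 y - (q + c 1 / (2 * Y))"
    define e2 where "e2 = qq (-1) (-1) y - (q - cm / (2 * Y))"
    have e1b: "\<bar>e1\<bar> \<le> K0 * P y"
    proof -
      have "\<bar>e1\<bar> \<le> K1 * P y" using b1 pw K1 unfolding e1_def Y_def by (smt (verit) mult_left_mono)
      also have "\<dots> \<le> K0 * P y" using K2 P0 by (simp add: K0_def distrib_right)
      finally show ?thesis .
    qed
    have e2b: "\<bar>e2\<bar> \<le> K0 * P y"
    proof -
      have "\<bar>e2\<bar> \<le> K2 * P y" using b2 pw K2 unfolding e2_def Y_def by (smt (verit) mult_left_mono)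
      also have "\<dots> \<le> K0 * P y" using K1 P0 by (simp add: K0_def distrib_right)
      finally show ?thesis .
    qed
    have Wparts: "2 * \<bar>aa\<bar> / Y + 4 * K0 * P y / q \<le> 1/2" "K0 * P y \<le> q/8" "\<bar>cm\<bar> / (2 * Y) \<le> q/8"
    proof -
      have nn: "2 * \<bar>aa\<bar> * (1 / Y) \<ge> 0" "4 * K0 / q * P y \<ge> 0" "K0 * P y \<ge> 0" "\<bar>cm\<bar> / 2 * (1 / Y) \<ge> 0"
        using K0 P0 q01 Ypos by auto
      have "W y = 2 * \<bar>aa\<bar> * (1 / Y) + 4 * K0 / q * P y + K0 * P y + \<bar>cm\<bar> / 2 * (1 / Y)"
        by (simp add: W_def Y_def)
      then have "2 * \<bar>aa\<bar> * (1 / Y) + 4 * K0 / q * P y \<le> 1/2" "K0 * P y \<le> q/8" "\<bar>cm\<bar> / 2 * (1 / Y) \<le> q/8"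
        using Wy nn by linarith+
      then show "2 * \<bar>aa\<bar> / Y + 4 * K0 * P y / q \<le> 1/2" "K0 * P y \<le> q/8" "\<bar>cm\<bar> / (2 * Y) \<le> q/8"
        by auto
    qed
    have dpm: "qq 1 1 y - qq (-1) (-1) y = aa * q / Y + e1 - e2"
      using q01 Ypos unfolding e1_def e2_def aa_def cm_def by (simp add: field_simps)
    have dmq: "qq (-1) (-1) y - q = - cm / (2 * Y) + e2" unfolding e2_def by simp
    have mm: "qq (-1) (-1) y \<ge> q / 2"
    proof -
      have "\<bar>cm / (2 * Y)\<bar> \<le> q / 8" using Wparts(3) Ypos by (simp add: abs_divide)
      then show ?thesis using dmq e2b Wparts(2) by (simp only: abs_le_iff) linarith
    qed
    have mmpos: "qq (-1) (-1) y > 0" using mm q01 by linarith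
    have z: "\<bar>qq 1 1 y / qq (-1) (-1) y - 1\<bar> \<le> 1/2"
    proof -
      have "qq 1 1 y / qq (-1) (-1) y - 1 = (qq 1 1 y - qq (-1) (-1) y) / qq (-1) (-1) y"
        using mmpos by (simp add: field_simps)
      moreover have "\<bar>qq 1 1 y - qq (-1) (-1) y\<bar> \<le> \<bar>aa\<bar> * q / Y + 2 * K0 * P y"
      proof -
        have aq: "\<bar>aa * q / Y\<bar> = \<bar>aa\<bar> * q / Y" using q01 Ypos by (simp add: abs_mult abs_divide)
        show ?thesis using dpm aq e1b e2b by (simp only: abs_le_iff) linarith
      qed
      ultimately have "\<bar>qq 1 1 y / qq (-1) (-1) y - 1\<bar> \<le> (\<bar>aa\<bar> * q / Y + 2 * K0 * P y) / qq (-1) (-1) y"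
        using mmpos by (simp add: abs_divide divide_right_mono)
      also have "\<dots> \<le> (\<bar>aa\<bar> * q / Y + 2 * K0 * P y) / (q / 2)"
        using mm q01 P0 K0 Ypos by (intro divide_left_mono add_nonneg_nonneg mult_nonneg_nonneg) auto
      also have "\<dots> = 2 * \<bar>aa\<bar> / Y + 4 * K0 * P y / q" using q01 by (simp add: field_simps)
      also have "\<dots> \<le> 1/2" by (rule Wparts(1))
      finally show ?thesis .
    qed
    have "\<bar>ln (qq 1 1 y / qq (-1) (-1) y) - aa * (ln Y - ln (Y - 1))\<bar> \<le> Kf * P y"
      unfolding Kf_def
      by (rule ln_ratio_bound[OF Y2 q01(1) P0 P1 PY e1b e2b K0 dpm dmq mm z])
    then show ?thesis by (simp add: Y_def P_def)
  qed
  show ?thesis using Kf main by (intro exI[of _ Kf] exI[of _ "max N 2"]) auto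
qed

end


context crw begin

fun mseq :: "nat \<Rightarrow> real" where
  "mseq 0 = 1"
| "mseq (Suc x) = mseq x * qq 1 1 (Suc x) / qq (-1) (-1) (Suc x)"

lemma mseq_pos: "mseq x > 0"
  by (induction x) (auto intro!: divide_pos_pos mult_pos_pos qpp_pos qmm_pos)

lemma ln_mseq: "ln (mseq x) = (\<Sum>y\<in>{1..x}. ln (qq 1 1 y / qq (-1) (-1) y))"
proof (induction x)
  case 0 then show ?case by simp
next
  case (Suc x)
  have p: "qq 1 1 (Suc x) / qq (-1) (-1) (Suc x) > 0" using qpp_pos qmm_pos by simp
  have "ln (mseq (Suc x)) = ln (mseq x) + ln (qq 1 1 (Suc x) / qq (-1) (-1) (Suc x))"
  proof -
    have "mseq (Suc x) = mseq x * (qq 1 1 (Suc x) / qq (-1) (-1) (Suc x))" by simp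
    then show ?thesis using mseq_pos[of x] p by (simp only: ln_mult_pos)
  qed
  moreover have "(\<Sum>y\<in>{1..Suc x}. ln (qq 1 1 y / qq (-1) (-1) y)) = (\<Sum>y\<in>{1..x}. ln (qq 1 1 y / qq (-1) (-1) y)) + ln (qq 1 1 (Suc x) / qq (-1) (-1) (Suc x))"
    by (rule sum.cl_ivl_Suc[THEN trans]) simp
  ultimately show ?case using Suc by linarith
qed

lemma ln_telescope: "ln (real x) = (\<Sum>y\<in>{1..x}. ln (real y) - ln (real y - 1))"
proof (induction x)
  case 0 then show ?case by simp
next
  case (Suc x)
  have "(\<Sum>y\<in>{1..Suc x}. ln (real y) - ln (real y - 1)) = (\<Sum>y\<in>{1..x}. ln (real y) - ln (real y - 1)) + (ln (real (Suc x)) - ln (real x))"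
    by (rule sum.cl_ivl_Suc[THEN trans]) simp
  moreover have "real (Suc x) - 1 = real x" by simp
  ultimately show ?case using Suc by (simp only:)
qed

definition dd :: "nat \<Rightarrow> real" where
  "dd y = ln (qq 1 1 y / qq (-1) (-1) y) - aa * (ln (real y) - ln (real y - 1))"

lemma D_sum: "ln (mseq x) - aa * ln (real x) = (\<Sum>y\<in>{1..x}. dd y)"
proof -
  have "ln (mseq x) - aa * ln (real x) = (\<Sum>y\<in>{1..x}. ln (qq 1 1 y / qq (-1) (-1) y)) - aa * (\<Sum>y\<in>{1..x}. ln (real y) - ln (real y - 1))"
    using ln_mseq[of x] ln_telescope[of x] by simp
  also have "\<dots> = (\<Sum>y\<in>{1..x}. dd y)"
    unfolding dd_def sum_subtractf sum_distrib_left[symmetric] by simp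
  finally show ?thesis .
qed

lemma D_bounded: "\<exists>B. \<forall>x. \<bar>ln (mseq x) - aa * ln (real x)\<bar> \<le> B"
proof -
  obtain K Y0 where K: "K \<ge> 0" and Y0: "Y0 \<ge> 2"
    and b: "\<And>y. y \<ge> Y0 \<Longrightarrow> \<bar>dd y\<bar> \<le> K * real y powr (-1-\<delta>')"
    using log_ratio_bound unfolding dd_def by blast
  define P where "P y = real y powr (-1-\<delta>')" for y :: nat
  have sP: "summable P" unfolding P_def using dp_pos by (subst summable_real_powr_iff) auto
  have P0: "P y \<ge> 0" for y by (simp add: P_def)
  define B where "B = (\<Sum>y<Y0. \<bar>dd y\<bar>) + K * suminf P"
  have "\<bar>ln (mseq x) - aa * ln (real x)\<bar> \<le> B" for x
  proof -
    have "\<bar>ln (mseq x) - aa * ln (real x)\<bar> \<le> (\<Sum>y\<in>{1..x}. \<bar>dd y\<bar>)"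
      unfolding D_sum by (rule sum_abs)
    also have "\<dots> \<le> (\<Sum>y\<in>{1..x}. (if y < Y0 then \<bar>dd y\<bar> else 0) + K * P y)"
    proof (intro sum_mono)
      fix y assume "y \<in> {1..x}"
      show "\<bar>dd y\<bar> \<le> (if y < Y0 then \<bar>dd y\<bar> else 0) + K * P y"
        using b[of y] K P0[of y] by (auto simp: P_def)
    qed
    also have "\<dots> = (\<Sum>y\<in>{1..x}. (if y < Y0 then \<bar>dd y\<bar> else 0)) + K * (\<Sum>y\<in>{1..x}. P y)"
      by (simp add: sum.distrib sum_distrib_left)
    also have "(\<Sum>y\<in>{1..x}. (if y < Y0 then \<bar>dd y\<bar> else 0)) \<le> (\<Sum>y<Y0. \<bar>dd y\<bar>)"
    proof -
      have "(\<Sum>y\<in>{1..x}. (if y < Y0 then \<bar>dd y\<bar> else 0)) = (\<Sum>y\<in>{1..x} \<inter> {..<Y0}. \<bar>dd y\<bar>)"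
        by (subst sum.inter_restrict) auto
      also have "\<dots> \<le> (\<Sum>y<Y0. \<bar>dd y\<bar>)" by (intro sum_mono2) auto
      finally show ?thesis .
    qed
    also have "(\<Sum>y\<in>{1..x}. P y) \<le> suminf P"
      using sP P0 by (intro sum_le_suminf) auto
    finally show ?thesis using K unfolding B_def by (smt (verit) mult_left_mono)
  qed
  then show ?thesis by blast
qed

lemma mseq_bounds:
  "\<exists>C1 C2. C1 > 0 \<and> C2 > 0 \<and> (\<forall>x\<ge>1. C1 * real x powr aa \<le> mseq x \<and> mseq x \<le> C2 * real x powr aa)"
proof -
  obtain B where B: "\<And>x. \<bar>ln (mseq x) - aa * ln (real x)\<bar> \<le> B" using D_bounded by blast
  have "exp (-B) * real x powr aa \<le> mseq x \<and> mseq x \<le> exp B * real x powr aa" if x: "x \<ge> 1" for x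
  proof -
    have xp: "real x > 0" using x by simp
    have e: "mseq x = exp (ln (mseq x) - aa * ln (real x)) * real x powr aa"
      using xp mseq_pos[of x] by (simp add: powr_def exp_diff)
    have "exp (-B) \<le> exp (ln (mseq x) - aa * ln (real x))" "exp (ln (mseq x) - aa * ln (real x)) \<le> exp B"
      using B[of x] by (auto simp: abs_le_iff)
    moreover have "real x powr aa \<ge> 0" by simp
    ultimately have "exp (-B) * real x powr aa \<le> exp (ln (mseq x) - aa * ln (real x)) * real x powr aa"
      "exp (ln (mseq x) - aa * ln (real x)) * real x powr aa \<le> exp B * real x powr aa"
      by (auto intro: mult_right_mono)
    then show ?thesis using e by simp
  qed
  then show ?thesis by (intro exI[of _ "exp (-B)"] exI[of _ "exp B"]) auto
qed

end


context crw begin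

lemma diag_lim:
  assumes i: "i \<in> dirs"
  shows "(\<lambda>y. qq i i y) \<longlonglongrightarrow> q"
proof -
  obtain K where K: "K \<ge> 0" and ev: "eventually (\<lambda>y. \<bar>qq i i y - (q + of_int i * c i / (2 * real y))\<bar> \<le> K * real y powr (-1-\<delta>)) sequentially"
    using asym_bound[OF i] by blast
  have l0: "(\<lambda>y. K * real y powr (-1-\<delta>)) \<longlonglongrightarrow> 0"
  proof -
    have "(\<lambda>y. real y powr (-1-\<delta>)) \<longlonglongrightarrow> 0" using delta
      by (intro tendsto_neg_powr filterlim_real_sequentially) auto
    then show ?thesis using tendsto_mult_right_zero by blast
  qed
  have e0: "(\<lambda>y. qq i i y - (q + of_int i * c i / (2 * real y))) \<longlonglongrightarrow> 0"
    using ev by (intro Lim_null_comparison[OF _ l0]) simp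
  have l1: "(\<lambda>y. q + of_int i * c i / (2 * real y)) \<longlonglongrightarrow> q + 0"
  proof -
    have "(\<lambda>y. (of_int i * c i / 2) * (1 / real y)) \<longlonglongrightarrow> (of_int i * c i / 2) * 0"
      by (intro tendsto_intros lim_const_over_n)
    then have "(\<lambda>y. of_int i * c i / (2 * real y)) \<longlonglongrightarrow> 0" by simp
    then show ?thesis by (intro tendsto_intros)
  qed
  have "(\<lambda>y. (qq i i y - (q + of_int i * c i / (2 * real y))) + (q + of_int i * c i / (2 * real y))) \<longlonglongrightarrow> 0 + (q + 0)"
    by (intro tendsto_add e0 l1)
  then show ?thesis by simp
qed

lemma qmm_lim: "(\<lambda>y. qq (-1) (-1) y) \<longlonglongrightarrow> q" using diag_lim[of "-1"] by (simp add: dirs_def)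
lemma qpp_lim: "(\<lambda>y. qq 1 1 y) \<longlonglongrightarrow> q" using diag_lim[of 1] by (simp add: dirs_def)

lemma ev_qmm: "eventually (\<lambda>y. q/2 \<le> qq (-1) (-1) y \<and> qq (-1) (-1) y \<le> (1+q)/2) sequentially"
proof -
  have "eventually (\<lambda>y. qq (-1) (-1) y > q/2) sequentially"
    by (rule order_tendstoD(1)[OF qmm_lim]) (use q01 in simp)
  moreover have "eventually (\<lambda>y. qq (-1) (-1) y < (1+q)/2) sequentially"
    by (rule order_tendstoD(2)[OF qmm_lim]) (use q01 in simp)
  ultimately show ?thesis by eventually_elim auto
qed

lemma ev_qpp: "eventually (\<lambda>y. qq 1 1 y < 1) sequentially"
  by (rule order_tendstoD(2)[OF qpp_lim]) (use q01 in simp)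

definition wV :: "nat \<Rightarrow> real" where "wV x = 1 / mseq x"
definition rho :: "nat \<Rightarrow> real" where "rho y = qq (-1) 1 y / qq (-1) (-1) y * wV y"
definition dV :: "nat \<Rightarrow> real" where "dV x = (\<Sum>y\<in>{1..x}. rho y)"
definition uV :: "nat \<Rightarrow> real" where "uV x = dV x + wV x"
definition Vf :: "cstate \<Rightarrow> real" where "Vf s = (if snd s = -1 then dV (fst s) else uV (fst s - 1))"

lemma wV_pos: "wV x > 0" using mseq_pos by (simp add: wV_def)
lemma rho_nonneg: "rho y \<ge> 0"
  unfolding rho_def using nonneg[of "-1" 1 y] nonneg[of "-1" "-1" y] wV_pos[of y]
  by (auto simp: dirs_def intro!: mult_nonneg_nonneg divide_nonneg_nonneg)
lemma dV_nonneg: "dV x \<ge> 0" unfolding dV_def using rho_nonneg by (simp add: sum_nonneg)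
lemma dV_Suc: "dV (Suc x) = dV x + rho (Suc x)"
  unfolding dV_def by (rule sum.cl_ivl_Suc[THEN trans]) simp
lemma dV_mono: "x \<le> x' \<Longrightarrow> dV x \<le> dV x'"
  unfolding dV_def using rho_nonneg by (intro sum_mono2) auto
lemma uV_ge: "uV x \<ge> dV x" using wV_pos by (simp add: uV_def less_imp_le)
lemma Vf_nonneg: "Vf s \<ge> 0" using dV_nonneg uV_ge by (auto simp: Vf_def intro: order_trans)

lemma wV_Suc: "wV (Suc x) = wV x * qq (-1) (-1) (Suc x) / qq 1 1 (Suc x)"
  using qpp_pos[of "Suc x"] qmm_pos[of "Suc x"] mseq_pos[of x] by (simp add: wV_def)

lemma stoch1: "qq 1 (-1) y = 1 - qq 1 1 y" using stoch[of 1 y] by (simp add: dirs_def)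
lemma stochm: "qq (-1) 1 y = 1 - qq (-1) (-1) y" using stoch[of "-1" y] by (simp add: dirs_def)

lemma uV_Suc: "uV (Suc x) = dV x + wV x / qq 1 1 (Suc x)"
proof -
  have p: "qq 1 1 (Suc x) > 0" "qq (-1) (-1) (Suc x) > 0" using qpp_pos qmm_pos by auto
  have "uV (Suc x) = dV x + (qq (-1) 1 (Suc x) / qq (-1) (-1) (Suc x) + 1) * wV (Suc x)"
    by (simp add: uV_def dV_Suc rho_def algebra_simps)
  also have "qq (-1) 1 (Suc x) / qq (-1) (-1) (Suc x) + 1 = 1 / qq (-1) (-1) (Suc x)"
    using p by (simp add: stochm field_simps)
  finally show ?thesis using p by (simp add: wV_Suc)
qed

lemma Vf_harm:
  assumes s: "s \<in> SS" "s \<noteq> (0, -1)"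
  shows "Pf Vf s = Vf s"
proof -
  obtain x i where si: "s = (x, i)" by (cases s)
  have i: "i = 1 \<or> i = -1" using s si by (auto simp: crw_states_def dirs_def)
  show ?thesis
  proof (cases "i = 1")
    case True
    then obtain y where x: "x = Suc y" using s si by (cases x) (auto simp: crw_states_def)
    have p: "qq 1 1 (Suc y) > 0" using qpp_pos by auto
    have "Pf Vf s = qq 1 1 (Suc y) * uV (Suc y) + qq 1 (-1) (Suc y) * dV y"
      using True x si by (simp add: Pf_def pu_def pd_def up_def dn_def Vf_def dirs_def)
    also have "\<dots> = dV y + wV y"
      using p by (simp add: uV_Suc stoch1 field_simps)
    finally show ?thesis using True x si by (simp add: Vf_def uV_def)
  next
    case False
    then have im: "i = -1" using i by simp
    then obtain y where x: "x = Suc y" using s si by (cases x) auto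
    have p: "qq (-1) (-1) (Suc y) > 0" using qmm_pos by auto
    have "Pf Vf s = qq (-1) 1 (Suc y) * uV (Suc y) + qq (-1) (-1) (Suc y) * dV y"
      using im x si by (simp add: Pf_def pu_def pd_def up_def dn_def Vf_def dirs_def)
    also have "\<dots> = dV (Suc y)"
      using p by (simp add: uV_def dV_Suc rho_def stochm field_simps)
    finally show ?thesis using im x si by (simp add: Vf_def)
  qed
qed


lemma rho_0: "rho 0 = 0"
  using boundary[of "-1"] by (simp add: rho_def dirs_def)

lemma rho_partial: "(\<Sum>i<Suc n. rho i) = dV n"
proof (induction n)
  case 0 then show ?case by (simp add: rho_0 dV_def)
next
  case (Suc n) then show ?case by (simp add: dV_Suc)
qed

lemma qmm_le1: "qq (-1) (-1) y \<le> 1" using stochm[of y] nonneg[of "-1" 1 y] by (simp add: dirs_def)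
lemma qpp_le1: "qq 1 1 y \<le> 1" using stoch1[of y] nonneg[of 1 "-1" y] by (simp add: dirs_def)

lemma dV_unbounded:
  assumes a: "aa \<le> 1"
  shows "\<exists>X. dV X > K"
proof (rule ccontr)
  assume "\<not> ?thesis"
  then have bd: "\<And>X. dV X \<le> K" by (simp add: not_less)
  have sr: "summable rho"
  proof (rule summableI_nonneg_bounded[where x = K])
    fix n show "rho n \<ge> 0" by (rule rho_nonneg)
  next
    fix n show "(\<Sum>i<n. rho i) \<le> K"
    proof (cases n)
      case 0 then show ?thesis using bd[of 0] dV_nonneg[of 0] by simp
    next
      case (Suc m) then show ?thesis using rho_partial[of m] bd[of m] by simp
    qed
  qed
  obtain C1 C2 where C: "C1 > 0" "C2 > 0" and mb: "\<And>x. x \<ge> 1 \<Longrightarrow> C1 * real x powr aa \<le> mseq x \<and> mseq x \<le> C2 * real x powr aa"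
    using mseq_bounds by blast
  define \<kappa> where "\<kappa> = (1 - q) / (2 * C2)"
  have kp: "\<kappa> > 0" using C q01 by (simp add: \<kappa>_def)
  obtain N where N: "\<And>y. y \<ge> N \<Longrightarrow> q/2 \<le> qq (-1) (-1) y \<and> qq (-1) (-1) y \<le> (1+q)/2"
    using ev_qmm unfolding eventually_sequentially by blast
  have "summable (\<lambda>y. inverse (real y) :: real)"
  proof (rule summable_comparison_test')
    show "summable (\<lambda>y. rho y / \<kappa>)" using sr by (rule summable_divide)
    fix y assume y: "y \<ge> max N 1"
    then have y1: "y \<ge> 1" and yN: "y \<ge> N" by auto
    have qm: "q/2 \<le> qq (-1) (-1) y" "qq (-1) (-1) y \<le> (1+q)/2" using N[OF yN] by auto
    have qmpos: "qq (-1) (-1) y > 0" using qm q01 by linarith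
    have qmp: "qq (-1) 1 y \<ge> (1 - q)/2" using qm stochm[of y] by simp
    have "rho y \<ge> qq (-1) 1 y * wV y"
    proof -
      have "qq (-1) 1 y \<le> qq (-1) 1 y / qq (-1) (-1) y"
        using qmpos qmm_le1[of y] qmp q01 by (simp add: le_divide_eq mult_left_le)
      then show ?thesis unfolding rho_def using wV_pos[of y] by (intro mult_right_mono) auto
    qed
    moreover have wi: "wV y \<ge> inverse (C2 * real y)"
    proof -
      have "real y powr aa \<le> real y powr 1" using y1 a by (intro powr_mono) auto
      then have "real y powr aa \<le> real y" using y1 by simp
      then have "C2 * real y powr aa \<le> C2 * real y" using C by (intro mult_left_mono) auto
      then have "mseq y \<le> C2 * real y" using mb[OF y1] by linarith
      then show ?thesis unfolding wV_def using mseq_pos[of y] C y1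
        by (simp add: field_simps le_divide_eq)
    qed
    moreover have "(1 - q)/2 * inverse (C2 * real y) \<le> qq (-1) 1 y * wV y"
      using qmp q01 C wi by (intro mult_mono) (auto simp: less_imp_le[OF wV_pos])
    ultimately have "rho y \<ge> (1 - q)/2 * inverse (C2 * real y)" by linarith
    then have "\<kappa> * inverse (real y) \<le> rho y" using C by (simp add: \<kappa>_def field_simps)
    then show "norm (inverse (real y) :: real) \<le> rho y / \<kappa>" using kp y1
      by (simp add: field_simps)
  qed
  then show False using not_summable_harmonic[where 'a=real] by simp
qed

lemma recurrent_all:
  assumes a: "aa \<le> 1" and t: "t \<in> SS"
  shows "F t t = 1"
proof -
  have fin: "finite {s\<in>SS. Vf s \<le> K}" for K
  proof -
    obtain X where X: "dV X > K" using dV_unbounded[OF a] by blast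
    have "{s\<in>SS. Vf s \<le> K} \<subseteq> {s\<in>SS. fst s \<le> X}"
    proof (rule subsetI)
      fix s assume "s \<in> {s\<in>SS. Vf s \<le> K}"
      then have sS: "s \<in> SS" and v0: "Vf s \<le> K" by auto
      obtain x i where si: "s = (x,i)" by (cases s)
      have v: "Vf (x,i) \<le> K" using v0 si by simp
      have "x \<le> X"
      proof (rule ccontr)
        assume "\<not> x \<le> X"
        then have xX: "x > X" by simp
        show False
        proof (cases "i = -1")
          case True
          then have "Vf (x,i) = dV x" by (simp add: Vf_def)
          then show False using dV_mono[of X x] xX v X by simp
        next
          case False
          then have "Vf (x,i) = uV (x - 1)" by (simp add: Vf_def)
          moreover have "dV X \<le> dV (x - 1)" using xX by (intro dV_mono) simp
          ultimately show False using uV_ge[of "x-1"] v X by simp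
        qed
      qed
      then show "s \<in> {s\<in>SS. fst s \<le> X}" using sS si by simp
    qed
    then show ?thesis using finite_levels by (rule finite_subset)
  qed
  have A: "t \<in> {t, (0,-1)}" "finite {t, (0,-1)}" "{t, (0, - 1)} \<subseteq> SS"
    using t by (auto simp: crw_states_def dirs_def)
  show ?thesis
    by (rule rec_crit[OF A Vf_nonneg _ fin]) (use Vf_harm in auto)
qed

lemma Pt_Q_Pf: "h t = 1 \<Longrightarrow> Pt t s + Q t h s = Pf h s"
  by (auto simp: Pt_def Q_def Pf_def qu_def qd_def)

end


context crw begin

lemma transient_all:
  assumes a: "aa > 1" and t: "t \<in> SS"
  shows "F t t \<noteq> 1"
proof
  assume Ft: "F t t = 1"
  obtain C1 C2 where C: "C1 > 0" "C2 > 0" and mb: "\<And>x. x \<ge> 1 \<Longrightarrow> C1 * real x powr aa \<le> mseq x \<and> mseq x \<le> C2 * real x powr aa"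
    using mseq_bounds by blast
  have swV: "summable wV"
  proof (rule summable_comparison_test')
    show "summable (\<lambda>y. (1/C1) * real y powr (-aa))"
      using a by (intro summable_mult) (subst summable_real_powr_iff; simp)
    fix y :: nat assume y1: "y \<ge> 1"
    have "C1 * real y powr aa \<le> mseq y" using mb[OF y1] by simp
    moreover have "real y powr aa > 0" using y1 by simp
    ultimately have "1 / mseq y \<le> 1 / (C1 * real y powr aa)"
      using C mseq_pos[of y] by (intro divide_left_mono) auto
    also have "\<dots> = (1/C1) * real y powr (-aa)" using y1 by (simp add: powr_minus divide_inverse)
    finally show "norm (wV y) \<le> (1/C1) * real y powr (-aa)"
      using wV_pos[of y] by (simp add: wV_def)
  qed
  obtain N where N: "\<And>y. y \<ge> N \<Longrightarrow> q/2 \<le> qq (-1) (-1) y \<and> qq (-1) (-1) y \<le> (1+q)/2"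
    using ev_qmm unfolding eventually_sequentially by blast
  have sr: "summable rho"
  proof (rule summable_comparison_test')
    show "summable (\<lambda>y. (2/q) * wV y)" using swV by (rule summable_mult)
    fix y assume yN: "y \<ge> N"
    have qm: "q/2 \<le> qq (-1) (-1) y" using N[OF yN] by auto
    have qmp: "qq (-1) 1 y \<le> 1" "qq (-1) 1 y \<ge> 0" using stochm[of y] nonneg[of "-1" "-1" y] qmm_le1[of y]
      by (auto simp: dirs_def)
    have "qq (-1) 1 y / qq (-1) (-1) y \<le> 1 / (q/2)"
      using qm qmp q01 by (intro frac_le) auto
    then have "rho y \<le> (2/q) * wV y" unfolding rho_def using wV_pos[of y]
      by (intro mult_right_mono) auto
    then show "norm (rho y) \<le> (2/q) * wV y" using rho_nonneg[of y] by simp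
  qed
  define Ls where "Ls = suminf rho"
  have dV_lim: "dV \<longlonglongrightarrow> Ls"
  proof -
    have "(\<lambda>n. \<Sum>i<n. rho i) \<longlonglongrightarrow> Ls" unfolding Ls_def using sr summable_LIMSEQ by blast
    then have "(\<lambda>n. \<Sum>i<Suc n. rho i) \<longlonglongrightarrow> Ls" by (rule LIMSEQ_Suc)
    then show ?thesis by (simp only: rho_partial)
  qed
  have wV_lim: "wV \<longlonglongrightarrow> 0" using swV by (rule summable_LIMSEQ_zero)
  have uV_lim: "uV \<longlonglongrightarrow> Ls"
  proof -
    have "(\<lambda>x. dV x + wV x) \<longlonglongrightarrow> Ls + 0" by (intro tendsto_add dV_lim wV_lim)
    then show ?thesis by (simp add: uV_def[abs_def])
  qed
  have uV_Suc_ge: "uV (Suc x) \<ge> uV x" for x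
  proof -
    have "wV x \<le> wV x / qq 1 1 (Suc x)"
      using wV_pos[of x] qpp_pos[of "Suc x"] qpp_le1[of "Suc x"] by (simp add: le_divide_eq)
    then show ?thesis using uV_Suc[of x] uV_def[of x] by linarith
  qed
  have inc: "incseq uV" using uV_Suc_ge by (simp add: incseq_SucI)
  have uV_le: "uV x \<le> Ls" for x using incseq_le[OF inc uV_lim] by simp
  have dV_le: "dV x \<le> Ls" for x using uV_le[of x] uV_ge[of x] by simp
  have Vf_le: "Vf s \<le> Ls" for s using uV_le dV_le by (simp add: Vf_def)
  have Vt_lt: "Vf t < Ls"
  proof -
    obtain z i where tz: "t = (z,i)" by (cases t)
    show ?thesis
    proof (cases "i = -1")
      case True
      then have "Vf t = dV z" by (simp add: tz Vf_def)
      also have "\<dots> < uV z" using wV_pos by (simp add: uV_def)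
      finally show ?thesis using uV_le[of z] by simp
    next
      case False
      then have Vt: "Vf t = uV (z - 1)" by (simp add: tz Vf_def)
      obtain M where M: "\<And>y. y \<ge> M \<Longrightarrow> qq 1 1 y < 1"
        using ev_qpp unfolding eventually_sequentially by blast
      define y where "y = max M z"
      have "z - 1 \<le> y" by (simp add: y_def)
      then have "uV (z - 1) \<le> uV y" by (rule incseqD[OF inc])
      also have "\<dots> < uV (Suc y)"
      proof -
        have "qq 1 1 (Suc y) < 1" using M[of "Suc y"] by (simp add: y_def)
        then have "wV y < wV y / qq 1 1 (Suc y)"
          using wV_pos[of y] qpp_pos[of "Suc y"] by (simp add: less_divide_eq)
        then show ?thesis using uV_Suc[of y] uV_def[of y] by linarith
      qed
      also have "\<dots> \<le> Ls" by (rule uV_le)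
      finally show ?thesis using Vt by simp
    qed
  qed
  define D where "D = Ls - Vf t"
  have D: "D > 0" using Vt_lt by (simp add: D_def)
  define h where "h s = min 1 ((Ls - Vf s) / D)" for s
  have h0: "h s \<ge> 0" for s using Vf_le[of s] D by (simp add: h_def)
  have h1: "h s \<le> 1" for s by (simp add: h_def)
  have ht: "h t = 1" using D by (simp add: h_def D_def)
  have hsup: "Pt t s + Q t h s \<le> h s" for s
  proof -
    have "Pt t s + Q t h s = Pf h s" using ht by (rule Pt_Q_Pf)
    also have "Pf h s \<le> h s"
    proof -
      obtain x i where si: "s = (x,i)" by (cases s)
      show ?thesis
      proof (cases "i \<in> dirs")
        case False
        then have "pu s = 0" "pd s = 0" by (auto simp: si pu_def pd_def)
        then show ?thesis using h0 by (simp add: Pf_def)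
      next
        case True
        have sum1: "pu s + pd s = 1" using pu_pd_sum True si by simp
        have Pf1: "Pf h s \<le> 1"
        proof -
          have "Pf h s \<le> Pf (\<lambda>_. 1) s" using h1 by (intro Pf_mono) auto
          then show ?thesis using sum1 by (simp add: Pf_def)
        qed
        show ?thesis
        proof (cases "x = 0")
          case x0: True
          show ?thesis
          proof (cases "i = -1")
            case True
            have "Vf s = 0" using x0 True si by (simp add: Vf_def dV_def)
            then have "h s = 1" using D Vf_nonneg[of t] by (simp add: h_def D_def)
            then show ?thesis using Pf1 by simp
          next
            case False
            then have i1: "i = 1" using \<open>i \<in> dirs\<close> by (simp add: dirs_def)
            have "pd s = 0" using x0 by (simp add: pd_zero_at0 si)
            then have "pu s = 1" using sum1 by simp
            moreover have "h (up s) = h s" using x0 i1 si by (simp add: h_def Vf_def up_def)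
            ultimately show ?thesis using \<open>pd s = 0\<close> by (simp add: Pf_def)
          qed
        next
          case False
          then have sS: "s \<in> SS" "s \<noteq> (0,-1)" using True si by (auto simp: crw_states_def)
          have harm: "Pf Vf s = Vf s" using Vf_harm[OF sS] .
          have "Pf h s \<le> Pf (\<lambda>u. (Ls - Vf u) / D) s" by (intro Pf_mono) (simp_all add: h_def)
          also have "\<dots> = (Ls * (pu s + pd s) - Pf Vf s) / D"
            using D by (simp add: Pf_def field_simps)
          also have "\<dots> = (Ls - Vf s) / D" using sum1 harm by simp
          finally have "Pf h s \<le> (Ls - Vf s) / D" .
          then show ?thesis using Pf1 by (simp add: h_def)
        qed
      qed
    qed
    finally show ?thesis .
  qed
  have Fle: "F t s \<le> h s" for s by (rule supersol[OF h0 hsup])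
  obtain x where x: "uV x > Vf t"
  proof -
    have "eventually (\<lambda>x. uV x > Vf t) sequentially"
      by (rule order_tendstoD(1)[OF uV_lim Vt_lt])
    then show ?thesis using that unfolding eventually_sequentially by blast
  qed
  have vS: "(x+1, 1) \<in> SS" by (simp add: crw_states_def dirs_def)
  have "F t (x+1, 1) = 1" by (rule F_one_all[OF t Ft vS])
  moreover have "h (x+1, 1) < 1"
  proof -
    have "Vf (x+1, 1) = uV x" by (simp add: Vf_def)
    then have "(Ls - Vf (x+1,1)) / D < 1" using x D by (simp add: D_def divide_less_eq)
    then show ?thesis by (simp add: h_def)
  qed
  ultimately show False using Fle[of "(x+1,1)"] by simp
qed

end


context crw begin

lemma summable_mseq:
  assumes a: "aa < -1"
  shows "summable mseq"
proof -
  obtain C1 C2 where C: "C1 > 0" "C2 > 0" and mb: "\<And>x. x \<ge> 1 \<Longrightarrow> C1 * real x powr aa \<le> mseq x \<and> mseq x \<le> C2 * real x powr aa"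
    using mseq_bounds by blast
  show ?thesis
  proof (rule summable_comparison_test')
    show "summable (\<lambda>y. C2 * real y powr aa)"
      using a by (intro summable_mult) (subst summable_real_powr_iff; simp)
    fix y :: nat assume y1: "y \<ge> 1"
    show "norm (mseq y) \<le> C2 * real y powr aa" using mb[OF y1] mseq_pos[of y] by simp
  qed
qed

lemma mseq_Suc': "mseq (Suc x) = mseq x * (qq 1 1 (Suc x) / qq (-1) (-1) (Suc x))" by simp

declare mseq.simps(2)[simp del]

lemma mseq_nn: "mseq x \<ge> 0" using mseq_pos[of x] by simp

context
  assumes a: "aa < -1"
begin

definition Tsum :: "nat \<Rightarrow> real" where "Tsum x = (\<Sum>n. mseq (n + x) + mseq (n + x + 1))"
definition tau :: "nat \<Rightarrow> real" where "tau x = Tsum x / mseq x"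
definition Dd :: "nat \<Rightarrow> real" where "Dd x = (1 + qq (-1) 1 (x+1) * tau (x+1)) / qq (-1) (-1) (x+1)"
definition PhiD :: "nat \<Rightarrow> real" where "PhiD x = (\<Sum>y<x. Dd y)"
definition Phif :: "cstate \<Rightarrow> real" where
  "Phif s = (if snd s = -1 then PhiD (fst s) else tau (fst s - 1) + PhiD (fst s - 1))"

lemma sT: "summable (\<lambda>n. mseq (n + x) + mseq (n + x + 1))"
proof -
  have s: "summable mseq" using summable_mseq[OF a] .
  have "summable (\<lambda>n. mseq (n + x))" using summable_ignore_initial_segment[OF s] .
  moreover have "summable (\<lambda>n. mseq (n + (x + 1)))" using summable_ignore_initial_segment[OF s] .
  ultimately show ?thesis by (simp add: summable_add add.assoc)
qed

lemma Tsum_rec: "Tsum x = mseq x + mseq (x + 1) + Tsum (x + 1)"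
proof -
  have "(\<Sum>n. mseq (Suc n + x) + mseq (Suc n + x + 1)) = Tsum x - (mseq (0 + x) + mseq (0 + x + 1))"
    unfolding Tsum_def by (rule suminf_split_head[OF sT])
  moreover have "(\<lambda>n. mseq (Suc n + x) + mseq (Suc n + x + 1)) = (\<lambda>n. mseq (n + (x + 1)) + mseq (n + (x + 1) + 1))"
    by simp
  ultimately show ?thesis by (simp add: Tsum_def)
qed

lemma Tsum_nonneg: "Tsum x \<ge> 0"
  unfolding Tsum_def using sT mseq_nn by (intro suminf_nonneg) (auto intro: add_nonneg_nonneg)

lemma tau_nonneg: "tau x \<ge> 0" using Tsum_nonneg mseq_pos[of x] by (simp add: tau_def)

lemma Dd_nonneg: "Dd x \<ge> 0"
  unfolding Dd_def using tau_nonneg nonneg[of "-1" 1 "x+1"] qmm_pos[of "x+1"]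
  by (intro divide_nonneg_nonneg add_nonneg_nonneg mult_nonneg_nonneg) (auto simp: dirs_def)

lemma PhiD_nonneg: "PhiD x \<ge> 0" unfolding PhiD_def using Dd_nonneg by (simp add: sum_nonneg)
lemma Phif_nonneg: "Phif s \<ge> 0" using PhiD_nonneg tau_nonneg by (simp add: Phif_def add_nonneg_nonneg)

lemma tau_rec: "tau x = 1 + qq 1 1 (x+1) / qq (-1) (-1) (x+1) * (1 + tau (x+1))"
proof -
  have m1: "mseq (x+1) = mseq x * (qq 1 1 (x+1) / qq (-1) (-1) (x+1))" using mseq_Suc'[of x] by simp
  have p: "mseq x > 0" "mseq (x+1) > 0" using mseq_pos by auto
  have "tau x = (mseq x + mseq (x+1) + tau (x+1) * mseq (x+1)) / mseq x"
    using Tsum_rec[of x] p by (simp add: tau_def)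
  also have "\<dots> = 1 + mseq (x+1) / mseq x * (1 + tau (x+1))"
    using p by (simp add: field_simps)
  also have "mseq (x+1) / mseq x = qq 1 1 (x+1) / qq (-1) (-1) (x+1)"
    using p m1 by simp
  finally show ?thesis .
qed

lemma Phif_drift:
  assumes s: "s \<in> SS" "s \<noteq> (0, -1)"
  shows "1 + Pf Phif s = Phif s"
proof -
  obtain x i where si: "s = (x, i)" by (cases s)
  have i: "i = 1 \<or> i = -1" using s si by (auto simp: crw_states_def dirs_def)
  show ?thesis
  proof (cases "i = 1")
    case True
    then obtain y where x: "x = Suc y" using s si by (cases x) (auto simp: crw_states_def)
    have p: "qq 1 1 (Suc y) > 0" "qq (-1) (-1) (Suc y) > 0" using qpp_pos qmm_pos by auto
    have "Pf Phif s = qq 1 1 (Suc y) * (tau (Suc y) + PhiD (Suc y)) + qq 1 (-1) (Suc y) * PhiD y"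
      using True x si by (simp add: Pf_def pu_def pd_def up_def dn_def Phif_def dirs_def)
    also have "\<dots> = qq 1 1 (Suc y) * (tau (Suc y) + Dd y) + PhiD y"
      by (simp add: PhiD_def stoch1 algebra_simps)
    also have "qq 1 1 (Suc y) * (tau (Suc y) + Dd y) = qq 1 1 (Suc y) / qq (-1) (-1) (Suc y) * (1 + tau (Suc y))"
      using p by (simp add: Dd_def stochm field_simps)
    finally have "1 + Pf Phif s = tau y + PhiD y" using tau_rec[of y] by simp
    then show ?thesis using True x si by (simp add: Phif_def)
  next
    case False
    then have im: "i = -1" using i by simp
    then obtain y where x: "x = Suc y" using s si by (cases x) auto
    have p: "qq (-1) (-1) (Suc y) > 0" using qmm_pos by auto
    have "Pf Phif s = qq (-1) 1 (Suc y) * (tau (Suc y) + PhiD (Suc y)) + qq (-1) (-1) (Suc y) * PhiD y"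
      using im x si by (simp add: Pf_def pu_def pd_def up_def dn_def Phif_def dirs_def)
    also have "\<dots> = qq (-1) 1 (Suc y) * (tau (Suc y) + Dd y) + PhiD y"
      by (simp add: PhiD_def stochm algebra_simps)
    finally have "1 + Pf Phif s = 1 + qq (-1) 1 (Suc y) * (tau (Suc y) + Dd y) + PhiD y" by simp
    also have "1 + qq (-1) 1 (Suc y) * (tau (Suc y) + Dd y) = Dd y"
      using p by (simp add: Dd_def stochm field_simps)
    finally have e: "1 + Pf Phif s = Dd y + PhiD y" .
    have "Phif s = PhiD y + Dd y" using im x si by (simp add: Phif_def PhiD_def)
    then show ?thesis using e by simp
  qed
qed

lemma posrec_all:
  assumes t: "t \<in> SS"
  shows "summable (\<lambda>n. real n * fp n t t)"
proof -
  have B: "t \<in> {t, (0,-1)}" "finite {t, (0,-1)}" "{t, (0, - 1)} \<subseteq> SS"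
    using t by (auto simp: crw_states_def dirs_def)
  have dr: "1 + Pf Phif s \<le> Phif s" if "s \<in> SS" "s \<notin> {t, (0,-1)}" for s
    using Phif_drift[of s] that by simp
  have "\<exists>K. \<forall>k. Sk t k t \<le> K"
    by (rule foster[OF B Phif_nonneg dr])
  then obtain K where "\<And>k. Sk t k t \<le> K" by blast
  then show ?thesis by (rule summable_from_Sk)
qed

end

end


context crw begin

lemma not_summable_mseq:
  assumes a: "aa \<ge> -1"
  shows "\<not> summable mseq"
proof
  assume sm: "summable mseq"
  obtain C1 C2 where C: "C1 > 0" "C2 > 0" and mb: "\<And>x. x \<ge> 1 \<Longrightarrow> C1 * real x powr aa \<le> mseq x \<and> mseq x \<le> C2 * real x powr aa"
    using mseq_bounds by blast
  have "summable (\<lambda>y. inverse (real y) :: real)"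
  proof (rule summable_comparison_test')
    show "summable (\<lambda>y. mseq y / C1)" using sm by (rule summable_divide)
    fix y :: nat assume y1: "y \<ge> 1"
    have "real y powr (-1) \<le> real y powr aa" using y1 a by (intro powr_mono) auto
    then have "C1 * inverse (real y) \<le> C1 * real y powr aa"
      using C y1 by (simp add: powr_minus)
    then have "C1 * inverse (real y) \<le> mseq y" using mb[OF y1] by linarith
    then show "norm (inverse (real y) :: real) \<le> mseq y / C1" using C y1
      by (simp add: field_simps)
  qed
  then show False using not_summable_harmonic[where 'a=real] by simp
qed

definition tauR :: "nat \<Rightarrow> nat \<Rightarrow> real" where
  "tauR R x = (\<Sum>y\<in>{x..<R}. mseq y + mseq (y+1)) / mseq x"
definition DR :: "nat \<Rightarrow> nat \<Rightarrow> real" where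
  "DR R y = (if y < R then (1 + qq (-1) 1 (y+1) * tauR R (y+1)) / qq (-1) (-1) (y+1) else 0)"
definition YD :: "nat \<Rightarrow> nat \<Rightarrow> nat \<Rightarrow> real" where
  "YD z R x = (\<Sum>y\<in>{z..<x}. DR R y)"
definition Yf :: "nat \<Rightarrow> nat \<Rightarrow> cstate \<Rightarrow> real" where
  "Yf z R s = (if snd s = -1 then YD z R (fst s) else if fst s \<le> z then 0 else tauR R (fst s - 1) + YD z R (fst s - 1))"

lemma tauR_nonneg: "tauR R x \<ge> 0"
  unfolding tauR_def using mseq_nn by (intro divide_nonneg_nonneg sum_nonneg add_nonneg_nonneg) auto

lemma tauR_zero: "x \<ge> R \<Longrightarrow> tauR R x = 0" by (simp add: tauR_def)

lemma tauR_rec: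
  assumes "x < R"
  shows "tauR R x = 1 + qq 1 1 (x+1) / qq (-1) (-1) (x+1) * (1 + tauR R (x+1))"
proof -
  have m1: "mseq (x+1) = mseq x * (qq 1 1 (x+1) / qq (-1) (-1) (x+1))" using mseq_Suc'[of x] by simp
  have p: "mseq x > 0" "mseq (x+1) > 0" using mseq_pos by auto
  have sp: "(\<Sum>y\<in>{x..<R}. mseq y + mseq (y+1)) = (mseq x + mseq (x+1)) + (\<Sum>y\<in>{Suc x..<R}. mseq y + mseq (y+1))"
    using assms by (subst sum.atLeast_Suc_lessThan) auto
  have "tauR R x = (mseq x + mseq (x+1) + tauR R (x+1) * mseq (x+1)) / mseq x"
    unfolding tauR_def sp using p by simp
  also have "\<dots> = 1 + mseq (x+1) / mseq x * (1 + tauR R (x+1))"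
    using p by (simp add: field_simps)
  also have "mseq (x+1) / mseq x = qq 1 1 (x+1) / qq (-1) (-1) (x+1)"
    using p m1 by simp
  finally show ?thesis .
qed

lemma DR_nonneg: "DR R y \<ge> 0"
  unfolding DR_def using tauR_nonneg nonneg[of "-1" 1 "y+1"] qmm_pos[of "y+1"]
  by (auto simp: dirs_def intro!: divide_nonneg_nonneg add_nonneg_nonneg mult_nonneg_nonneg)

lemma YD_nonneg: "YD z R x \<ge> 0" unfolding YD_def using DR_nonneg by (simp add: sum_nonneg)
lemma YD_low: "x \<le> z \<Longrightarrow> YD z R x = 0" by (simp add: YD_def)
lemma YD_Suc: "x \<ge> z \<Longrightarrow> YD z R (Suc x) = YD z R x + DR R x" by (simp add: YD_def)
lemma Yf_nonneg: "Yf z R s \<ge> 0" using YD_nonneg tauR_nonneg by (simp add: Yf_def add_nonneg_nonneg)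

lemma Q_Pf_zero: "f t = 0 \<Longrightarrow> Q t f s = Pf f s"
  by (auto simp: Q_def Pf_def qu_def qd_def)

lemma Yf_sub:
  assumes s: "s \<in> SS"
  shows "Yf z R s \<le> 1 + Pf (Yf z R) s"
proof -
  obtain x i where si: "s = (x, i)" by (cases s)
  have i: "i = 1 \<or> i = -1" using s si by (auto simp: crw_states_def dirs_def)
  have P0: "Pf (Yf z R) s \<ge> 0" using pu_nonneg pd_nonneg Yf_nonneg by (simp add: Pf_def add_nonneg_nonneg)
  show ?thesis
  proof (cases "x \<le> z")
    case True
    then have "Yf z R s = 0" using si i by (auto simp: Yf_def YD_low)
    then show ?thesis using P0 by simp
  next
    case False
    then obtain y where x: "x = Suc y" and yz: "y \<ge> z" by (cases x) auto
    show ?thesis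
    proof (cases "i = 1")
      case True
      have p: "qq 1 1 (Suc y) > 0" "qq (-1) (-1) (Suc y) > 0" using qpp_pos qmm_pos by auto
      have "Pf (Yf z R) s = qq 1 1 (Suc y) * (tauR R (Suc y) + YD z R (Suc y)) + qq 1 (-1) (Suc y) * YD z R y"
        using True x si yz by (simp add: Pf_def pu_def pd_def up_def dn_def Yf_def dirs_def)
      also have "\<dots> = qq 1 1 (Suc y) * (tauR R (Suc y) + DR R y) + YD z R y"
        using yz by (simp add: YD_Suc stoch1 algebra_simps)
      finally have e: "Pf (Yf z R) s = qq 1 1 (Suc y) * (tauR R (Suc y) + DR R y) + YD z R y" .
      have Ys: "Yf z R s = tauR R y + YD z R y" using True x si yz by (simp add: Yf_def)
      have "tauR R y \<le> 1 + qq 1 1 (Suc y) * (tauR R (Suc y) + DR R y)"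
      proof (cases "y < R")
        case True
        have "qq 1 1 (Suc y) * (tauR R (Suc y) + DR R y) = qq 1 1 (Suc y) / qq (-1) (-1) (Suc y) * (1 + tauR R (Suc y))"
          using p True by (simp add: DR_def stochm field_simps)
        then show ?thesis using tauR_rec[OF True] by simp
      next
        case False
        then have "tauR R y = 0" by (simp add: tauR_zero)
        moreover have "qq 1 1 (Suc y) * (tauR R (Suc y) + DR R y) \<ge> 0"
          using p tauR_nonneg DR_nonneg by (simp add: add_nonneg_nonneg)
        ultimately show ?thesis by simp
      qed
      then show ?thesis using e Ys by simp
    next
      case False
      then have im: "i = -1" using i by simp
      have p: "qq (-1) (-1) (Suc y) > 0" using qmm_pos by auto
      have qmpn: "qq (-1) 1 (Suc y) \<ge> 0" using nonneg[of "-1" 1 "Suc y"] by (simp add: dirs_def)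
      have "Pf (Yf z R) s = qq (-1) 1 (Suc y) * (tauR R (Suc y) + YD z R (Suc y)) + qq (-1) (-1) (Suc y) * YD z R y"
        using im x si yz by (simp add: Pf_def pu_def pd_def up_def dn_def Yf_def dirs_def)
      also have "\<dots> = qq (-1) 1 (Suc y) * (tauR R (Suc y) + DR R y) + YD z R y"
        using yz by (simp add: YD_Suc stochm algebra_simps)
      finally have e: "Pf (Yf z R) s = qq (-1) 1 (Suc y) * (tauR R (Suc y) + DR R y) + YD z R y" .
      have Ys: "Yf z R s = YD z R y + DR R y" using im x si yz by (simp add: Yf_def YD_Suc)
      have "DR R y \<le> 1 + qq (-1) 1 (Suc y) * (tauR R (Suc y) + DR R y)"
      proof (cases "y < R")
        case True
        have e1: "qq (-1) (-1) (Suc y) * DR R y = 1 + qq (-1) 1 (Suc y) * tauR R (Suc y)"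
          using p True by (simp add: DR_def)
        have e2: "DR R y = qq (-1) 1 (Suc y) * DR R y + qq (-1) (-1) (Suc y) * DR R y"
          using stochm[of "Suc y"] by (metis distrib_right mult_1 add.commute diff_add_cancel)
        have e3: "qq (-1) 1 (Suc y) * (tauR R (Suc y) + DR R y) = qq (-1) 1 (Suc y) * tauR R (Suc y) + qq (-1) 1 (Suc y) * DR R y"
          by (simp add: distrib_left)
        show ?thesis using e1 e2 e3 by linarith
      next
        case False
        then have "DR R y = 0" by (simp add: DR_def)
        then show ?thesis using qmpn tauR_nonneg[of R "Suc y"] by simp
      qed
      then show ?thesis using e Ys by simp
    qed
  qed
qed

lemma Yf_bound: "Yf z R s \<le> (\<Sum>y<R. DR R y) + (\<Sum>x<R. tauR R x)"
proof -
  have yd: "YD z R x \<le> (\<Sum>y<R. DR R y)" for x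
  proof -
    have "YD z R x = (\<Sum>y\<in>{z..<x}. (if y < R then DR R y else 0))"
      unfolding YD_def by (intro sum.cong) (auto simp: DR_def)
    also have "\<dots> = (\<Sum>y\<in>{z..<x} \<inter> {..<R}. DR R y)" by (subst sum.inter_restrict) auto
    also have "\<dots> \<le> (\<Sum>y<R. DR R y)" using DR_nonneg by (intro sum_mono2) auto
    finally show ?thesis .
  qed
  have ta: "tauR R x \<le> (\<Sum>x<R. tauR R x)" for x
  proof (cases "x < R")
    case True then show ?thesis using tauR_nonneg by (intro member_le_sum) auto
  next
    case False then show ?thesis using tauR_nonneg by (simp add: tauR_zero sum_nonneg)
  qed
  have s1: "(\<Sum>y<R. DR R y) \<ge> 0" "(\<Sum>x<R. tauR R x) \<ge> 0"
    using DR_nonneg tauR_nonneg by (auto intro: sum_nonneg)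
  show ?thesis
  proof (cases "snd s = -1")
    case True then show ?thesis using yd[of "fst s"] s1 by (simp add: Yf_def)
  next
    case False
    show ?thesis
    proof (cases "fst s \<le> z")
      case True then show ?thesis using False s1 by (simp add: Yf_def)
    next
      case F2: False
      then have "Yf z R s = tauR R (fst s - 1) + YD z R (fst s - 1)" using False by (simp add: Yf_def)
      then show ?thesis using yd[of "fst s - 1"] ta[of "fst s - 1"] by linarith
    qed
  qed
qed

lemma tauR_unbounded:
  assumes a: "aa \<ge> -1"
  shows "\<exists>R. tauR R z > K"
proof (cases "K < 0")
  case True then show ?thesis using tauR_nonneg[of 0 z] by (intro exI[of _ 0]) linarith
next
  case False
  then have K: "K \<ge> 0" by simp
  have ns: "\<not> summable mseq" by (rule not_summable_mseq[OF a])
  define B where "B = K * mseq z + (\<Sum>i<z. mseq i)"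
  have "\<exists>n. (\<Sum>i<n. mseq i) > B"
  proof (rule ccontr)
    assume "\<not> ?thesis"
    then have "summable mseq" using mseq_nn
      by (intro summableI_nonneg_bounded[where x = B]) (auto simp: not_less)
    then show False using ns by simp
  qed
  then obtain n where n: "(\<Sum>i<n. mseq i) > B" by blast
  have Bz: "B \<ge> (\<Sum>i<z. mseq i)" using K mseq_nn[of z] by (simp add: B_def)
  have nz: "z \<le> n"
  proof (rule ccontr)
    assume "\<not> z \<le> n"
    then have "(\<Sum>i<n. mseq i) \<le> (\<Sum>i<z. mseq i)" using mseq_nn by (intro sum_mono2) auto
    then show False using n Bz by linarith
  qed
  have split: "(\<Sum>i<n. mseq i) = (\<Sum>i<z. mseq i) + (\<Sum>i\<in>{z..<n}. mseq i)"
    using sum.atLeastLessThan_concat[of 0 z n mseq] nz by (simp add: atLeast0LessThan)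
  have "(\<Sum>i\<in>{z..<n}. mseq i) > K * mseq z" using n split by (simp add: B_def)
  moreover have "(\<Sum>i\<in>{z..<n}. mseq i) \<le> (\<Sum>y\<in>{z..<n}. mseq y + mseq (y+1))"
    using mseq_nn by (intro sum_mono) auto
  ultimately have "(\<Sum>y\<in>{z..<n}. mseq y + mseq (y+1)) > K * mseq z" by linarith
  then have "tauR n z > K" using mseq_pos[of z] by (simp add: tauR_def less_divide_eq)
  then show ?thesis by blast
qed

end


context crw begin

lemma null_all:
  assumes a1: "aa \<ge> -1" and a2: "aa \<le> 1" and t: "t \<in> SS"
  shows "\<not> summable (\<lambda>n. real n * fp n t t)"
proof
  assume sm: "summable (\<lambda>n. real n * fp n t t)"
  have Ft: "F t t = 1" by (rule recurrent_all[OF a2 t])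
  define Ks where "Ks = 2 * (\<Sum>n. real n * fp n t t)"
  have Skt: "Sk t k t \<le> Ks" for k unfolding Ks_def by (rule Sk_bounded_from_summable[OF sm Ft])
  obtain z i where tz: "t = (z, i)" by (cases t)
  have idirs: "i \<in> dirs" using t tz by (auto simp: crw_states_def)
  define u0 where "u0 = (z+1, 1::int)"
  have u0S: "u0 \<in> SS" by (simp add: u0_def crw_states_def dirs_def)
  obtain m p where p: "p > 0" and hp: "\<And>k. Sk t (k + m) t \<ge> p * Sk t k u0"
    using Sk_transfer[OF t u0S] by blast
  have Su0: "Sk t k u0 \<le> Ks / p" for k
  proof -
    have "p * Sk t k u0 \<le> Ks" using hp[of k] Skt[of "k+m"] by linarith
    then show ?thesis using p by (simp add: field_simps)
  qed
  have Fu0: "F t u0 = 1" by (rule F_one_all[OF t Ft u0S])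
  have gk_lim: "(\<lambda>k. gk t k u0) \<longlonglongrightarrow> 0"
  proof -
    have "(\<lambda>k. 1 - H t k u0) \<longlonglongrightarrow> 1 - F t u0" by (intro tendsto_diff tendsto_const H_tendsto)
    then show ?thesis using Fu0 by (simp add: gk_def[abs_def])
  qed
  have bound: "tauR R z \<le> Ks / p" for R
  proof -
    define Y where "Y = Yf z R"
    define Bd where "Bd = (\<Sum>y<R. DR R y) + (\<Sum>x<R. tauR R x)"
    have Yt: "Y t = 0" using idirs by (auto simp: Y_def Yf_def tz dirs_def YD_low)
    have Ysub: "Y s \<le> 1 + Q t Y s" if "s \<in> SS" for s
      using Yf_sub[OF that, of z R] Q_Pf_zero[of Y t s, OF Yt] by (simp add: Y_def)
    have Ybd: "Y s \<le> Bd" if "s \<in> SS" for s unfolding Y_def Bd_def by (rule Yf_bound)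
    have low: "Sk t k u0 \<ge> Y u0 - Bd * gk t k u0" for k
      by (rule Sk_lower[OF Ysub Ybd u0S])
    have "(\<lambda>k. Ks / p + Bd * gk t k u0) \<longlonglongrightarrow> Ks / p + Bd * 0"
      by (intro tendsto_intros gk_lim)
    then have lim: "(\<lambda>k. Ks / p + Bd * gk t k u0) \<longlonglongrightarrow> Ks / p" by simp
    have "\<forall>n\<ge>0. Y u0 \<le> Ks / p + Bd * gk t n u0"
    proof (intro allI impI)
      fix n :: nat
      show "Y u0 \<le> Ks / p + Bd * gk t n u0" using low[of n] Su0[of n] by linarith
    qed
    then have "Y u0 \<le> Ks / p" by (intro LIMSEQ_le_const[OF lim]) blast
    moreover have "Y u0 = tauR R z" by (simp add: Y_def Yf_def u0_def YD_low)
    ultimately show ?thesis by simp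
  qed
  obtain R where "tauR R z > Ks / p" using tauR_unbounded[OF a1] by blast
  then show False using bound[of R] by simp
qed

end

theorem theorem1p1:
  fixes q \<delta> :: real and c :: "int \<Rightarrow> real" and qq :: "int \<Rightarrow> int \<Rightarrow> nat \<Rightarrow> real"
  assumes q01: "0 < q" "q < 1"
    and delta: "\<delta> > 0"
    and nonneg: "\<And>i j x. i \<in> dirs \<Longrightarrow> j \<in> dirs \<Longrightarrow> qq i j x \<ge> 0"
    and stoch: "\<And>i x. i \<in> dirs \<Longrightarrow> qq i 1 x + qq i (-1) x = 1"
    and boundary: "\<And>i. i \<in> dirs \<Longrightarrow> qq i (-1) 0 = 0"
    and irred: "irreducible_on (crw_kernel qq) crw_states"
    and asym_same: "\<And>i. i \<in> dirs \<Longrightarrow>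
       (\<lambda>x::nat. qq i i x - (q + of_int i * c i / (2 * real x))) \<in> O(\<lambda>x. real x powr (-1 - \<delta>))"
    and asym_diff: "\<And>i j. i \<in> dirs \<Longrightarrow> j \<in> dirs \<Longrightarrow> j \<noteq> i \<Longrightarrow>
       (\<lambda>x::nat. qq i j x - (1 - q - of_int i * c i / (2 * real x))) \<in> O(\<lambda>x. real x powr (-1 - \<delta>))"
  shows "((c 1 + c (-1)) / 2 < - q \<longrightarrow> (\<forall>s\<in>crw_states. pos_recurrent_state (crw_kernel qq) s))
    \<and> ((c 1 + c (-1)) / 2 > q \<longrightarrow> (\<forall>s\<in>crw_states. transient_state (crw_kernel qq) s))
    \<and> (\<bar>(c 1 + c (-1)) / 2\<bar> \<le> q \<longrightarrow> (\<forall>s\<in>crw_states. null_recurrent_state (crw_kernel qq) s))"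
proof -
  interpret crw q \<delta> c qq
    by (unfold_locales) (use assms in auto)
  define cb where "cb = (c 1 + c (-1)) / 2"
  have aq: "aa = cb / q" by (simp add: aa_def cb_def)
  have rec: "recurrent_state (crw_kernel qq) s" if "aa \<le> 1" "s \<in> crw_states" for s
    using recurrent_all[OF that] by (simp add: recurrent_state_def return_prob_F)
  have P1: "(c 1 + c (-1)) / 2 < - q \<longrightarrow> (\<forall>s\<in>crw_states. pos_recurrent_state (crw_kernel qq) s)"
  proof (intro impI ballI)
    fix s assume h: "(c 1 + c (-1)) / 2 < - q" and s: "s \<in> crw_states"
    have a: "aa < -1" using h q01 unfolding aq cb_def[symmetric] by (simp add: divide_less_eq)
    show "pos_recurrent_state (crw_kernel qq) s"
      unfolding pos_recurrent_state_def using rec[of s] a s posrec_all[OF a s] by simp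
  qed
  have P2: "(c 1 + c (-1)) / 2 > q \<longrightarrow> (\<forall>s\<in>crw_states. transient_state (crw_kernel qq) s)"
  proof (intro impI ballI)
    fix s assume h: "(c 1 + c (-1)) / 2 > q" and s: "s \<in> crw_states"
    have a: "aa > 1" using h q01 unfolding aq cb_def[symmetric] by (simp add: less_divide_eq)
    show "transient_state (crw_kernel qq) s"
      unfolding transient_state_def recurrent_state_def return_prob_F using transient_all[OF a s] by simp
  qed
  have P3: "\<bar>(c 1 + c (-1)) / 2\<bar> \<le> q \<longrightarrow> (\<forall>s\<in>crw_states. null_recurrent_state (crw_kernel qq) s)"
  proof (intro impI ballI)
    fix s assume h: "\<bar>(c 1 + c (-1)) / 2\<bar> \<le> q" and s: "s \<in> crw_states"
    have h2: "cb \<le> q" "- q \<le> cb" using h unfolding cb_def[symmetric] by (auto simp: abs_le_iff)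
    have a: "aa \<le> 1" "aa \<ge> -1" using h2 q01 unfolding aq by (auto simp: divide_le_eq le_divide_eq)
    show "null_recurrent_state (crw_kernel qq) s"
      unfolding null_recurrent_state_def using rec[OF a(1) s] null_all[OF a(2) a(1) s] by simp
  qed
  show ?thesis using P1 P2 P3 by blast
qed


end
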